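(* Every matroid in $\mathcal{D}$ is an excluded minor for $\mathcal{Z}$ and is an excluded minor for $\mathcal{R}$.
   Context: Relaxing a circuit-hyperplane $H$ of $M$ means forming the matroid on $E(M)$ whose bases are the bases of $M$ together with $H$. $\mathcal{D}$ is the collection of all matroids obtained from a connected binary matroid $M$ having two disjoint circuit-hyperplanes $X,Y$ with $X\cup Y=E(M)$ by relaxing both $X$ and $Y$ (the matroid on $E(M)$ whose bases are the bases of $M$ together with $X$ and $Y$). $\mathcal{Z}$ is the class of matroids $M$ such that for every $e\in E(M)$, $M\backslash e$ or $M/e$ is binary. $\mathcal{R}$ is the class of matroids that are binary or can be obtained from a binary matroid by relaxing a circuit-hyperplane. An excluded minor for a minor-closed class is a matroid not in the class all of whose proper minors are in the class. *)

theory Defs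
  imports Main "HOL-Library.Z2"
begin

type_synonym 'a matroid = "'a set \<times> 'a set set"

definition gnd :: "'a matroid \<Rightarrow> 'a set" where "gnd M = fst M"
definition bases :: "'a matroid \<Rightarrow> 'a set set" where "bases M = snd M"

definition matroid :: "'a matroid \<Rightarrow> bool" where
  "matroid M \<longleftrightarrow> finite (gnd M) \<and> bases M \<noteq> {} \<and> (\<forall>B\<in>bases M. B \<subseteq> gnd M) \<and>
     (\<forall>B1\<in>bases M. \<forall>B2\<in>bases M. \<forall>x\<in>B1 - B2. \<exists>y\<in>B2 - B1. insert y (B1 - {x}) \<in> bases M)"

definition indep :: "'a matroid \<Rightarrow> 'a set \<Rightarrow> bool" where
  "indep M X \<longleftrightarrow> (\<exists>B\<in>bases M. X \<subseteq> B)"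

definition circuit :: "'a matroid \<Rightarrow> 'a set \<Rightarrow> bool" where
  "circuit M C \<longleftrightarrow> C \<subseteq> gnd M \<and> \<not> indep M C \<and> (\<forall>x\<in>C. indep M (C - {x}))"

definition rk :: "'a matroid \<Rightarrow> 'a set \<Rightarrow> nat" where
  "rk M X = Max (card ` {I. I \<subseteq> X \<and> indep M I})"

definition flat :: "'a matroid \<Rightarrow> 'a set \<Rightarrow> bool" where
  "flat M F \<longleftrightarrow> F \<subseteq> gnd M \<and> (\<forall>x\<in>gnd M - F. rk M (insert x F) > rk M F)"

definition hyperplane :: "'a matroid \<Rightarrow> 'a set \<Rightarrow> bool" where
  "hyperplane M H \<longleftrightarrow> flat M H \<and> rk M H + 1 = rk M (gnd M)"

definition circuit_hyperplane :: "'a matroid \<Rightarrow> 'a set \<Rightarrow> bool" where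
  "circuit_hyperplane M H \<longleftrightarrow> circuit M H \<and> hyperplane M H"

definition connected_matroid :: "'a matroid \<Rightarrow> bool" where
  "connected_matroid M \<longleftrightarrow>
     (\<forall>x\<in>gnd M. \<forall>y\<in>gnd M. x \<noteq> y \<longrightarrow> (\<exists>C. circuit M C \<and> x \<in> C \<and> y \<in> C))"

definition gf2_indep :: "('a \<Rightarrow> nat \<Rightarrow> bit) \<Rightarrow> 'a set \<Rightarrow> bool" where
  "gf2_indep f X \<longleftrightarrow>
     (\<forall>c :: 'a \<Rightarrow> bit. (\<forall>i. (\<Sum>x\<in>X. c x * f x i) = 0) \<longrightarrow> (\<forall>x\<in>X. c x = 0))"

definition binary :: "'a matroid \<Rightarrow> bool" where
  "binary M \<longleftrightarrow> (\<exists>f :: 'a \<Rightarrow> nat \<Rightarrow> bit. \<forall>X \<subseteq> gnd M. indep M X \<longleftrightarrow> gf2_indep f X)"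

definition restrict :: "'a matroid \<Rightarrow> 'a set \<Rightarrow> 'a matroid" where
  "restrict M S = (S, {B. B \<subseteq> S \<and> indep M B \<and>
                         (\<forall>B'. B \<subseteq> B' \<and> B' \<subseteq> S \<and> indep M B' \<longrightarrow> B' = B)})"

definition delete :: "'a matroid \<Rightarrow> 'a \<Rightarrow> 'a matroid" where
  "delete M e = restrict M (gnd M - {e})"

definition contract :: "'a matroid \<Rightarrow> 'a set \<Rightarrow> 'a matroid" where
  "contract M C = (gnd M - C, {X. X \<subseteq> gnd M - C \<and>
       (\<exists>BC. BC \<in> bases (restrict M C) \<and> X \<union> BC \<in> bases M)})"

definition minor :: "'a matroid \<Rightarrow> 'a matroid \<Rightarrow> bool" where
  "minor N M \<longleftrightarrow> (\<exists>C D. C \<subseteq> gnd M \<and> D \<subseteq> gnd M \<and> C \<inter> D = {} \<and>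
                      N = restrict (contract M C) (gnd M - C - D))"

definition proper_minor :: "'a matroid \<Rightarrow> 'a matroid \<Rightarrow> bool" where
  "proper_minor N M \<longleftrightarrow> (\<exists>C D. C \<subseteq> gnd M \<and> D \<subseteq> gnd M \<and> C \<inter> D = {} \<and> C \<union> D \<noteq> {} \<and>
                      N = restrict (contract M C) (gnd M - C - D))"

definition excluded_minor :: "('a matroid \<Rightarrow> bool) \<Rightarrow> 'a matroid \<Rightarrow> bool" where
  "excluded_minor P M \<longleftrightarrow> matroid M \<and> \<not> P M \<and> (\<forall>N. proper_minor N M \<longrightarrow> P N)"

definition relax :: "'a matroid \<Rightarrow> 'a set \<Rightarrow> 'a matroid" where
  "relax M H = (gnd M, bases M \<union> {H})"

definition classZ :: "'a matroid \<Rightarrow> bool" where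
  "classZ M \<longleftrightarrow> (\<forall>e\<in>gnd M. binary (delete M e) \<or> binary (contract M {e}))"

definition classR :: "'a matroid \<Rightarrow> bool" where
  "classR M \<longleftrightarrow> binary M \<or>
     (\<exists>N H. matroid N \<and> binary N \<and> circuit_hyperplane N H \<and> M = relax N H)"

definition classD :: "'a matroid \<Rightarrow> bool" where
  "classD M \<longleftrightarrow> (\<exists>N X Y. matroid N \<and> binary N \<and> connected_matroid N \<and>
       circuit_hyperplane N X \<and> circuit_hyperplane N Y \<and> X \<inter> Y = {} \<and> X \<union> Y = gnd N \<and>
       M = relax (relax N X) Y)"

end

theory Submission
  imports Defs
begin

declare add_bit_eq_xor[simp del] mult_bit_eq_and[simp del]

lemma bit_add_self[simp]: "(a::bit) + a = 0"
  by (metis diff_self minus_bit_def)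

lemma bit_add_eq0: "(a::bit) + b = 0 \<longleftrightarrow> a = b"
  by (metis add_diff_cancel_right' bit_add_self diff_add_cancel minus_bit_def)

lemma gf2_sub:
  assumes "finite X" "gf2_indep f X" "A \<subseteq> X"
  shows "gf2_indep f A"
  unfolding gf2_indep_def
proof (intro allI impI)
  fix c :: "'a \<Rightarrow> bit"
  assume h: "\<forall>i. (\<Sum>x\<in>A. c x * f x i) = 0"
  define c' where "c' = (\<lambda>x. if x \<in> A then c x else 0)"
  have "\<forall>i. (\<Sum>x\<in>X. c' x * f x i) = 0"
  proof
    fix i
    have "(\<Sum>x\<in>X. c' x * f x i) = (\<Sum>x\<in>A. c' x * f x i)"
      by (rule sum.mono_neutral_right) (use assms in \<open>auto simp: c'_def\<close>)
    also have "\<dots> = (\<Sum>x\<in>A. c x * f x i)" by (rule sum.cong) (auto simp: c'_def)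
    finally show "(\<Sum>x\<in>X. c' x * f x i) = 0" using h by simp
  qed
  then have "\<forall>x\<in>X. c' x = 0" using assms(2) unfolding gf2_indep_def by blast
  then show "\<forall>x\<in>A. c x = 0" using assms(3) unfolding c'_def by (metis subsetD)
qed

lemma gf2_circ:
  assumes "finite A" "\<not> gf2_indep g A" "\<forall>a\<in>A. gf2_indep g (A - {a})"
  shows "(\<Sum>a\<in>A. g a i) = 0"
proof -
  obtain c where c: "\<forall>i. (\<Sum>x\<in>A. c x * g x i) = 0" and z: "\<exists>x\<in>A. c x \<noteq> 0"
    using assms(2) unfolding gf2_indep_def by blast
  have all1: "\<forall>a\<in>A. c a = 1"
  proof (rule ccontr)
    assume "\<not> (\<forall>a\<in>A. c a = 1)"
    then obtain a where a: "a \<in> A" "c a = 0" by auto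
    have "\<forall>i. (\<Sum>x\<in>A - {a}. c x * g x i) = 0"
    proof
      fix i
      have "(\<Sum>x\<in>A. c x * g x i) = c a * g a i + (\<Sum>x\<in>A - {a}. c x * g x i)"
        using a assms(1) by (simp add: sum.remove)
      then show "(\<Sum>x\<in>A - {a}. c x * g x i) = 0" using c a by simp
    qed
    then have "\<forall>x\<in>A - {a}. c x = 0" using assms(3) a unfolding gf2_indep_def by blast
    then show False using z a by (metis Diff_iff empty_iff insert_iff)
  qed
  have "(\<Sum>x\<in>A. c x * g x i) = (\<Sum>a\<in>A. g a i)" by (rule sum.cong) (auto simp: all1)
  then show ?thesis using c by simp
qed

lemma gf2_zero:
  assumes "finite I"
  shows "gf2_indep (\<lambda>_ _. 0) I \<longleftrightarrow> I = {}"
proof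
  assume h: "gf2_indep (\<lambda>_ _. 0) I"
  have "\<forall>x\<in>I. (\<lambda>_. 1::bit) x = 0" using h unfolding gf2_indep_def by (erule_tac x="\<lambda>_. 1" in allE) simp
  then show "I = {}" by auto
qed (simp add: gf2_indep_def)

lemma gf2_free:
  assumes "finite T"
  shows "\<exists>f. \<forall>I\<subseteq>T. gf2_indep f I"
proof -
  obtain h :: "'a \<Rightarrow> nat" where inj: "inj_on h T"
    using assms by (metis finite_imp_inj_to_nat_seg)
  define f where "f = (\<lambda>x i. if h x = i then (1::bit) else 0)"
  have "gf2_indep f I" if "I \<subseteq> T" for I
    unfolding gf2_indep_def
  proof (intro allI impI ballI)
    fix c :: "'a \<Rightarrow> bit" and x
    assume c: "\<forall>i. (\<Sum>x\<in>I. c x * f x i) = 0" and x: "x \<in> I"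
    have fin: "finite I" using that assms finite_subset by blast
    have "(\<Sum>y\<in>I. c y * f y (h x)) = (\<Sum>y\<in>{x}. c y * f y (h x))"
    proof (rule sum.mono_neutral_right[OF fin])
      show "{x} \<subseteq> I" using x by auto
      show "\<forall>i\<in>I - {x}. c i * f i (h x) = 0"
        using inj that x by (auto simp: f_def inj_on_def)
    qed
    then show "c x = 0" using c by (simp add: f_def)
  qed
  then show ?thesis by blast
qed


lemma gf2_step:
  assumes "gf2_indep g' {e}"
  shows "\<exists>g. \<forall>I. finite I \<longrightarrow> e \<notin> I \<longrightarrow> (gf2_indep g I \<longleftrightarrow> gf2_indep g' (insert e I))"
proof -
  obtain i0 where i0: "g' e i0 = 1"
  proof -
    have "\<not> (\<forall>i. g' e i = 0)"
    proof
      assume h: "\<forall>i. g' e i = 0"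
      have "\<forall>i. (\<Sum>x\<in>{e}. (\<lambda>_. 1::bit) x * g' x i) = 0" using h by simp
      moreover have "(\<forall>i. (\<Sum>x\<in>{e}. (\<lambda>_. 1::bit) x * g' x i) = 0) \<longrightarrow> (\<forall>x\<in>{e}. (\<lambda>_. 1::bit) x = 0)"
        using assms unfolding gf2_indep_def by (rule allE)
      ultimately have "(1::bit) = 0" by simp
      then show False by simp
    qed
    then show ?thesis using that by auto
  qed
  define g where "g = (\<lambda>x i. g' x i + g' x i0 * g' e i)"
  have key: "(\<Sum>x\<in>I. c x * g x i) = (\<Sum>x\<in>I. c x * g' x i) + (\<Sum>x\<in>I. c x * g' x i0) * g' e i"
    for I c i
    by (simp add: g_def distrib_left sum.distrib sum_distrib_right mult.assoc)
  have "gf2_indep g I \<longleftrightarrow> gf2_indep g' (insert e I)" if fin: "finite I" and eI: "e \<notin> I" for I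
  proof
    assume gi: "gf2_indep g I"
    show "gf2_indep g' (insert e I)"
      unfolding gf2_indep_def
    proof (intro allI impI)
      fix c :: "'a \<Rightarrow> bit"
      assume c: "\<forall>i. (\<Sum>x\<in>insert e I. c x * g' x i) = 0"
      have c2: "c e * g' e i + (\<Sum>x\<in>I. c x * g' x i) = 0" for i
        using c fin eI by simp
      have s: "(\<Sum>x\<in>I. c x * g' x i0) = c e"
        using c2[of i0] i0 by (simp add: bit_add_eq0)
      have "\<forall>i. (\<Sum>x\<in>I. c x * g x i) = 0"
      proof
        fix i
        have "(\<Sum>x\<in>I. c x * g x i) = (\<Sum>x\<in>I. c x * g' x i) + c e * g' e i"
          using key[where I=I and c=c and i=i] s by simp
        then show "(\<Sum>x\<in>I. c x * g x i) = 0" using c2[of i] by (simp add: add.commute)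
      qed
      then have cI: "\<forall>x\<in>I. c x = 0" using gi unfolding gf2_indep_def by blast
      then have "(\<Sum>x\<in>I. c x * g' x i0) = 0" by simp
      then have "c e = 0" using s by simp
      then show "\<forall>x\<in>insert e I. c x = 0" using cI by simp
    qed
  next
    assume gi: "gf2_indep g' (insert e I)"
    show "gf2_indep g I"
      unfolding gf2_indep_def
    proof (intro allI impI)
      fix c :: "'a \<Rightarrow> bit"
      assume c: "\<forall>i. (\<Sum>x\<in>I. c x * g x i) = 0"
      define c' where "c' = c(e := (\<Sum>x\<in>I. c x * g' x i0))"
      have "\<forall>i. (\<Sum>x\<in>insert e I. c' x * g' x i) = 0"
      proof
        fix i
        have "(\<Sum>x\<in>insert e I. c' x * g' x i) = c' e * g' e i + (\<Sum>x\<in>I. c' x * g' x i)"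
          using fin eI by simp
        also have "(\<Sum>x\<in>I. c' x * g' x i) = (\<Sum>x\<in>I. c x * g' x i)"
          by (rule sum.cong) (use eI in \<open>auto simp: c'_def\<close>)
        also have "c' e * g' e i = (\<Sum>x\<in>I. c x * g' x i0) * g' e i" by (simp add: c'_def)
        finally have "(\<Sum>x\<in>insert e I. c' x * g' x i) = (\<Sum>x\<in>I. c x * g' x i0) * g' e i + (\<Sum>x\<in>I. c x * g' x i)" .
        also have "\<dots> = (\<Sum>x\<in>I. c x * g x i)" using key[where I=I and c=c and i=i] by (simp only: add.commute)
        finally show "(\<Sum>x\<in>insert e I. c' x * g' x i) = 0" using c by simp
      qed
      then have "\<forall>x\<in>insert e I. c' x = 0" using gi unfolding gf2_indep_def by blast
      then show "\<forall>x\<in>I. c x = 0" using eI by (auto simp: c'_def split: if_splits)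
    qed
  qed
  then show ?thesis by blast
qed

lemma gf2_contract:
  assumes "finite K" "gf2_indep f K"
  shows "\<exists>g. \<forall>I. finite I \<longrightarrow> I \<inter> K = {} \<longrightarrow> (gf2_indep g I \<longleftrightarrow> gf2_indep f (I \<union> K))"
  using assms
proof (induction K rule: finite_induct)
  case empty
  show ?case by (rule exI[of _ f]) simp
next
  case (insert e K)
  have gK: "gf2_indep f K" using gf2_sub[OF _ insert.prems] insert.hyps by blast
  obtain g' where g': "\<forall>I. finite I \<longrightarrow> I \<inter> K = {} \<longrightarrow> (gf2_indep g' I \<longleftrightarrow> gf2_indep f (I \<union> K))"
    using insert.IH[OF gK] by blast
  have "gf2_indep g' {e} \<longleftrightarrow> gf2_indep f ({e} \<union> K)"
    using g'[rule_format, of "{e}"] insert.hyps by simp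
  then have ge: "gf2_indep g' {e}" using insert.prems by simp
  obtain g where g: "\<forall>I. finite I \<longrightarrow> e \<notin> I \<longrightarrow> (gf2_indep g I \<longleftrightarrow> gf2_indep g' (insert e I))"
    using gf2_step[OF ge] by blast
  show ?case
  proof (rule exI[of _ g], intro allI impI)
    fix I assume "finite I" "I \<inter> insert e K = {}"
    then show "gf2_indep g I = gf2_indep f (I \<union> insert e K)"
    proof -
      have "gf2_indep g I = gf2_indep g' (insert e I)" using g[rule_format, of I] \<open>finite I\<close> \<open>I \<inter> insert e K = {}\<close> by simp
      also have "\<dots> = gf2_indep f (insert e I \<union> K)"
        using g'[rule_format, of "insert e I"] \<open>finite I\<close> \<open>I \<inter> insert e K = {}\<close> insert.hyps by simp
      finally show ?thesis by simp
    qed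
  qed
qed


lemma m_fin: "matroid M \<Longrightarrow> finite (gnd M)" by (simp add: matroid_def)
lemma m_bsub: "matroid M \<Longrightarrow> B \<in> bases M \<Longrightarrow> B \<subseteq> gnd M" by (simp add: matroid_def)
lemma m_ne: "matroid M \<Longrightarrow> bases M \<noteq> {}" by (simp add: matroid_def)
lemma m_exch: "matroid M \<Longrightarrow> B1 \<in> bases M \<Longrightarrow> B2 \<in> bases M \<Longrightarrow> x \<in> B1 - B2 \<Longrightarrow>
   \<exists>y\<in>B2 - B1. insert y (B1 - {x}) \<in> bases M"
  unfolding matroid_def by blast

lemma indep_sub: "indep M I \<Longrightarrow> J \<subseteq> I \<Longrightarrow> indep M J"
  unfolding indep_def by blast
lemma basis_indep: "B \<in> bases M \<Longrightarrow> indep M B"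
  unfolding indep_def by blast
lemma indep_gnd: "matroid M \<Longrightarrow> indep M I \<Longrightarrow> I \<subseteq> gnd M"
  unfolding indep_def using m_bsub by blast
lemma indep_empty: "matroid M \<Longrightarrow> indep M {}"
  unfolding indep_def using m_ne by blast
lemma indep_fin: "matroid M \<Longrightarrow> indep M I \<Longrightarrow> finite I"
  using indep_gnd m_fin finite_subset by blast

lemma basis_card_le:
  assumes M: "matroid M" and B1: "B1 \<in> bases M" and B2: "B2 \<in> bases M"
  shows "card B1 \<le> card B2"
proof -
  have fB2: "finite B2" using m_fin[OF M] m_bsub[OF M B2] finite_subset by blast
  have "\<And>B1. B1 \<in> bases M \<Longrightarrow> card (B1 - B2) = n \<Longrightarrow> card B1 \<le> card B2" for n
  proof (induction n)
    case 0
    have "finite (B1 - B2)" using m_fin[OF M] m_bsub[OF M 0(1)] finite_subset by blast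
    then have "B1 - B2 = {}" using 0(2) by simp
    then have "B1 \<subseteq> B2" by blast
    then show ?case using card_mono fB2 by blast
  next
    case (Suc n)
    have fB1: "finite B1" using m_fin[OF M] m_bsub[OF M Suc.prems(1)] finite_subset by blast
    have "B1 - B2 \<noteq> {}"
    proof
      assume "B1 - B2 = {}"
      then have "card (B1 - B2) = 0" by (simp only: card.empty)
      then show False using Suc.prems(2) by (simp only: nat.distinct)
    qed
    then obtain x where x: "x \<in> B1 - B2" by blast
    obtain y where y: "y \<in> B2 - B1" and B1': "insert y (B1 - {x}) \<in> bases M"
      using m_exch[OF M Suc.prems(1) B2 x] by blast
    have e: "insert y (B1 - {x}) - B2 = (B1 - B2) - {x}" using y by blast
    have "card ((B1 - B2) - {x}) = card (B1 - B2) - 1" using x by (rule card_Diff_singleton)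
    then have "card ((B1 - B2) - {x}) = n" using Suc.prems(2) by (simp only: diff_Suc_1)
    then have "card (insert y (B1 - {x}) - B2) = n" by (simp only: e)
    then have "card (insert y (B1 - {x})) \<le> card B2" using Suc.IH B1' by blast
    moreover have "card (insert y (B1 - {x})) = card B1"
    proof -
      have yn: "y \<notin> B1 - {x}" using y by blast
      have ff: "finite (B1 - {x})" using fB1 by (rule finite_Diff)
      have "card (insert y (B1 - {x})) = Suc (card (B1 - {x}))" by (rule card_insert_disjoint[OF ff yn])
      also have "\<dots> = card B1" by (rule card_Suc_Diff1[OF fB1]) (use x in blast)
      finally show ?thesis .
    qed
    ultimately show ?case by simp
  qed
  then show ?thesis using B1 by blast
qed

lemma basis_card_eq: "matroid M \<Longrightarrow> B1 \<in> bases M \<Longrightarrow> B2 \<in> bases M \<Longrightarrow> card B1 = card B2"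
  using basis_card_le le_antisym by blast

lemma indep_card_le:
  assumes M: "matroid M" and I: "indep M I" and B: "B \<in> bases M"
  shows "card I \<le> card B"
proof -
  obtain B' where B': "B' \<in> bases M" "I \<subseteq> B'" using I unfolding indep_def by blast
  have "finite B'" using m_fin[OF M] m_bsub[OF M B'(1)] finite_subset by blast
  then have "card I \<le> card B'" using B'(2) by (rule card_mono)
  also have "\<dots> = card B" using basis_card_eq[OF M B'(1) B] .
  finally show ?thesis .
qed

lemma indep_card_basis:
  assumes M: "matroid M" and I: "indep M I" and B: "B \<in> bases M" and c: "card I = card B"
  shows "I \<in> bases M"
proof -
  obtain B' where B': "B' \<in> bases M" "I \<subseteq> B'" using I unfolding indep_def by blast
  have f: "finite B'" using m_fin[OF M] m_bsub[OF M B'(1)] finite_subset by blast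
  have "card B' = card B" using basis_card_eq[OF M B'(1) B] .
  then have "I = B'" using card_subset_eq[OF f B'(2)] c by simp
  then show ?thesis using B'(1) by simp
qed


lemma augment:
  assumes M: "matroid M" and I1: "indep M I1" and I2: "indep M I2" and lt: "card I1 < card I2"
  shows "\<exists>x\<in>I2 - I1. indep M (insert x I1)"
proof (rule ccontr)
  assume na: "\<not> (\<exists>x\<in>I2 - I1. indep M (insert x I1))"
  define P where "P = (\<lambda>(B1, B2). B1 \<in> bases M \<and> B2 \<in> bases M \<and> I1 \<subseteq> B1 \<and> I2 \<subseteq> B2)"
  define mu where "mu = (\<lambda>(B1::'a set, B2). card (B2 - (I2 \<union> B1)))"
  obtain C1 C2 where "C1 \<in> bases M" "I1 \<subseteq> C1" "C2 \<in> bases M" "I2 \<subseteq> C2"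
    using I1 I2 unfolding indep_def by blast
  then have "P (C1, C2)" by (simp add: P_def)
  then obtain p where Pp: "P p" and pmin: "\<forall>q. P q \<longrightarrow> mu p \<le> mu q"
    using ex_has_least_nat[of P] by blast
  obtain B1 B2 where p: "p = (B1, B2)" by (cases p) blast
  have B1: "B1 \<in> bases M" and B2: "B2 \<in> bases M" and IB1: "I1 \<subseteq> B1" and IB2: "I2 \<subseteq> B2"
    using Pp p by (auto simp: P_def)
  have fin: "finite B1" "finite B2"
    using m_bsub[OF M B1] m_bsub[OF M B2] m_fin[OF M] finite_subset by blast+
  have fI: "finite I1" "finite I2" using IB1 IB2 fin finite_subset by blast+
  have b: "B2 - (I2 \<union> B1) = {}"
  proof (rule ccontr)
    assume "B2 - (I2 \<union> B1) \<noteq> {}"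
    then obtain x where x: "x \<in> B2 - (I2 \<union> B1)" by blast
    obtain y where y: "y \<in> B1 - B2" and B2': "insert y (B2 - {x}) \<in> bases M"
      using m_exch[OF M B2 B1, of x] x by blast
    have "P (B1, insert y (B2 - {x}))" using B1 B2' IB1 IB2 x by (auto simp: P_def)
    then have le: "mu (B1, B2) \<le> mu (B1, insert y (B2 - {x}))" using pmin p by blast
    have "insert y (B2 - {x}) - (I2 \<union> B1) = (B2 - (I2 \<union> B1)) - {x}" using y by auto
    moreover have "card ((B2 - (I2 \<union> B1)) - {x}) < card (B2 - (I2 \<union> B1))"
      using x finite_Diff[OF fin(2)] by (meson card_Diff1_less)
    ultimately show False using le unfolding mu_def by simp
  qed
  have c: "B1 - (I1 \<union> B2) = {}"
  proof (rule ccontr)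
    assume "B1 - (I1 \<union> B2) \<noteq> {}"
    then obtain x where x: "x \<in> B1 - (I1 \<union> B2)" by blast
    obtain y where y: "y \<in> B2 - B1" and B1': "insert y (B1 - {x}) \<in> bases M"
      using m_exch[OF M B1 B2, of x] x by blast
    have "y \<in> I2" using b y by blast
    moreover have "y \<notin> I1" using y IB1 by blast
    moreover have "indep M (insert y I1)"
      using B1' x IB1 unfolding indep_def by (rule_tac x="insert y (B1 - {x})" in bexI) auto
    ultimately show False using na by blast
  qed
  have d: "I2 \<inter> B1 \<subseteq> I1"
  proof
    fix z assume z: "z \<in> I2 \<inter> B1"
    show "z \<in> I1"
    proof (rule ccontr)
      assume "z \<notin> I1"
      moreover have "indep M (insert z I1)" using z IB1 B1 unfolding indep_def by blast
      ultimately show False using na z by blast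
    qed
  qed
  have ceq: "card B1 = card B2" using basis_card_eq[OF M B1 B2] .
  have "card (B1 - B2) = card (B2 - B1)"
    using ceq fin card_Int_Diff[of B1 B2] card_Int_Diff[of B2 B1] by (simp add: Int_commute)
  moreover have "I2 - I1 \<subseteq> B2 - B1" using d IB2 by blast
  moreover have "B1 - B2 \<subseteq> I1 - I2" using c IB2 by blast
  ultimately have "card (I2 - I1) \<le> card (I1 - I2)"
  proof -
    assume a: "card (B1 - B2) = card (B2 - B1)" "I2 - I1 \<subseteq> B2 - B1" "B1 - B2 \<subseteq> I1 - I2"
    have "card (I2 - I1) \<le> card (B2 - B1)" using a(2) finite_Diff[OF fin(2)] by (rule card_mono[rotated])
    also have "\<dots> = card (B1 - B2)" using a(1) by simp
    also have "\<dots> \<le> card (I1 - I2)" using a(3) finite_Diff[OF fI(1)] by (rule card_mono[rotated])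
    finally show ?thesis .
  qed
  then have "card I2 \<le> card I1"
    using card_Int_Diff[OF fI(1), of I2] card_Int_Diff[OF fI(2), of I1] by (simp add: Int_commute)
  then show False using lt by simp
qed


lemma max_ext:
  assumes fin: "finite S" and PI: "P I" and sub: "\<forall>J. P J \<longrightarrow> J \<subseteq> S"
  shows "\<exists>B. P B \<and> I \<subseteq> B \<and> (\<forall>J. P J \<and> B \<subseteq> J \<longrightarrow> J = B)"
proof -
  have "\<forall>y. (P y \<and> I \<subseteq> y) \<longrightarrow> card y < card S + 1"
    using sub fin by (simp add: card_mono less_Suc_eq_le)
  then obtain B where B: "P B \<and> I \<subseteq> B" and mx: "\<forall>y. P y \<and> I \<subseteq> y \<longrightarrow> card y \<le> card B"
    using ex_has_greatest_nat[of "\<lambda>y. P y \<and> I \<subseteq> y" I card "card S + 1"] PI by blast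
  have "\<forall>J. P J \<and> B \<subseteq> J \<longrightarrow> J = B"
  proof (intro allI impI)
    fix J assume J: "P J \<and> B \<subseteq> J"
    then have fJ: "finite J" using sub fin finite_subset by blast
    have "card J \<le> card B" using mx J B by blast
    then have "B = J" using card_seteq[OF fJ] J by blast
    then show "J = B" by simp
  qed
  then show ?thesis using B by blast
qed

lemma gnd_restrict[simp]: "gnd (restrict A S) = S" by (simp add: restrict_def gnd_def)
lemma bases_restrict: "bases (restrict A S) = {B. B \<subseteq> S \<and> indep A B \<and>
                         (\<forall>B'. B \<subseteq> B' \<and> B' \<subseteq> S \<and> indep A B' \<longrightarrow> B' = B)}"
  by (simp add: restrict_def bases_def)
lemma gnd_contract[simp]: "gnd (contract A C) = gnd A - C" by (simp add: contract_def gnd_def)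
lemma bases_contract: "bases (contract A C) = {X. X \<subseteq> gnd A - C \<and>
       (\<exists>BC. BC \<in> bases (restrict A C) \<and> X \<union> BC \<in> bases A)}"
  by (simp add: contract_def bases_def)
lemma gnd_relax[simp]: "gnd (relax A H) = gnd A" by (simp add: relax_def gnd_def)
lemma bases_relax[simp]: "bases (relax A H) = bases A \<union> {H}" by (simp add: relax_def bases_def)

lemma restrict_indep:
  assumes fin: "finite S"
  shows "indep (restrict A S) I \<longleftrightarrow> I \<subseteq> S \<and> indep A I"
proof
  assume "indep (restrict A S) I"
  then obtain B where B: "B \<in> bases (restrict A S)" "I \<subseteq> B" unfolding indep_def by blast
  from B(1) have "B \<subseteq> S" "indep A B" unfolding bases_restrict by simp_all
  then show "I \<subseteq> S \<and> indep A I" using B(2) indep_sub by blast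
next
  assume I: "I \<subseteq> S \<and> indep A I"
  have "\<exists>B. (B \<subseteq> S \<and> indep A B) \<and> I \<subseteq> B \<and> (\<forall>J. (J \<subseteq> S \<and> indep A J) \<and> B \<subseteq> J \<longrightarrow> J = B)"
    by (rule max_ext[OF fin]) (use I in simp_all)
  then obtain B where B: "B \<subseteq> S \<and> indep A B" "I \<subseteq> B" and mx: "\<forall>J. (J \<subseteq> S \<and> indep A J) \<and> B \<subseteq> J \<longrightarrow> J = B"
    by blast
  have "B \<in> bases (restrict A S)" unfolding bases_restrict using B mx by simp
  then show "indep (restrict A S) I" unfolding indep_def using B(2) by blast
qed

lemma restrict_bases_ne:
  assumes "finite S" "indep A {}"
  shows "bases (restrict A S) \<noteq> {}"
proof -
  have "indep (restrict A S) {}" using restrict_indep[OF assms(1)] assms(2) by simp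
  then show ?thesis unfolding indep_def by blast
qed

lemma restrict1_bases:
  assumes ie: "indep A {}"
  shows "BC \<in> bases (restrict A {e}) \<longleftrightarrow> BC = (if indep A {e} then {e} else {})"
proof
  assume h: "BC \<in> bases (restrict A {e})"
  then have s: "BC \<subseteq> {e}" and i: "indep A BC" and m: "\<forall>B'. BC \<subseteq> B' \<and> B' \<subseteq> {e} \<and> indep A B' \<longrightarrow> B' = BC"
    unfolding bases_restrict by simp_all
  show "BC = (if indep A {e} then {e} else {})"
  proof (cases "indep A {e}")
    case True
    then have "{e} = BC" using m s by blast
    then show ?thesis using True by simp
  next
    case False
    have "BC = {} \<or> BC = {e}" using s by blast
    then have "BC = {}" using False i by blast
    then show ?thesis using False by simp
  qed
next
  assume h: "BC = (if indep A {e} then {e} else {})"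
  show "BC \<in> bases (restrict A {e})"
  proof (cases "indep A {e}")
    case True
    then have "BC = {e}" using h by simp
    then show ?thesis unfolding bases_restrict using True by blast
  next
    case False
    then have b: "BC = {}" using h by simp
    have "\<forall>B'. {} \<subseteq> B' \<and> B' \<subseteq> {e} \<and> indep A B' \<longrightarrow> B' = {}"
    proof (intro allI impI)
      fix B' assume "{} \<subseteq> B' \<and> B' \<subseteq> {e} \<and> indep A B'"
      then have "B' = {} \<or> B' = {e}" "indep A B'" by blast+
      then show "B' = {}" using False by blast
    qed
    then show ?thesis unfolding bases_restrict b using ie by simp
  qed
qed

lemma contract1_indep:
  assumes ne: "bases A \<noteq> {}" and bs: "\<forall>B\<in>bases A. B \<subseteq> gnd A"
  shows "indep (contract A {e}) I \<longleftrightarrow> I \<subseteq> gnd A - {e} \<and> indep A (if indep A {e} then insert e I else I)"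
proof -
  obtain B00 where "B00 \<in> bases A" using ne by blast
  then have ie: "indep A {}" unfolding indep_def by blast
  define BC where "BC = (if indep A {e} then {e} else {})"
  have BCb: "BC \<in> bases (restrict A {e})" unfolding restrict1_bases[OF ie] BC_def by (rule refl)
  have BCu: "\<And>BC'. BC' \<in> bases (restrict A {e}) \<Longrightarrow> BC' = BC" unfolding restrict1_bases[OF ie] BC_def by assumption
  have eq: "(if indep A {e} then insert e I else I) = I \<union> BC" by (simp add: BC_def)
  have "indep (contract A {e}) I \<longleftrightarrow> I \<subseteq> gnd A - {e} \<and> indep A (I \<union> BC)"
  proof
    assume "indep (contract A {e}) I"
    then obtain X where X0: "X \<in> bases (contract A {e})" "I \<subseteq> X" unfolding indep_def by blast
    then have X1: "X \<subseteq> gnd A - {e}" and "\<exists>BC'. BC' \<in> bases (restrict A {e}) \<and> X \<union> BC' \<in> bases A"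
      unfolding bases_contract by simp_all
    then obtain BC' where b: "BC' \<in> bases (restrict A {e})" "X \<union> BC' \<in> bases A" by blast
    have "X \<union> BC \<in> bases A" using BCu[OF b(1)] b(2) by simp
    moreover have "I \<union> BC \<subseteq> X \<union> BC" using X0(2) by blast
    ultimately have "indep A (I \<union> BC)" unfolding indep_def by blast
    then show "I \<subseteq> gnd A - {e} \<and> indep A (I \<union> BC)" using X0(2) X1 by blast
  next
    assume h: "I \<subseteq> gnd A - {e} \<and> indep A (I \<union> BC)"
    then obtain B where B: "B \<in> bases A" "I \<union> BC \<subseteq> B" unfolding indep_def by blast
    have BB: "B - {e} \<union> BC = B"
    proof (cases "indep A {e}")
      case True
      then have "BC = {e}" by (simp add: BC_def)
      then show ?thesis using B(2) by blast
    next
      case False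
      have "e \<notin> B"
      proof
        assume "e \<in> B"
        then have "indep A {e}" unfolding indep_def using B(1) by blast
        then show False using False by simp
      qed
      moreover have "BC = {}" using False by (simp add: BC_def)
      ultimately show ?thesis by blast
    qed
    have g: "B - {e} \<subseteq> gnd A - {e}" using bs B(1) by blast
    have "B - {e} \<union> BC \<in> bases A" unfolding BB by (rule B(1))
    then have "B - {e} \<in> bases (contract A {e})"
      unfolding bases_contract using g BCb by blast
    moreover have "I \<subseteq> B - {e}" using h B(2) by blast
    ultimately show "indep (contract A {e}) I" unfolding indep_def by blast
  qed
  then show ?thesis unfolding eq .
qed

lemma gnd_delete[simp]: "gnd (delete A e) = gnd A - {e}" by (simp add: delete_def)


lemma augment_many:
  assumes M: "matroid M"
  shows "indep M I \<Longrightarrow> indep M J \<Longrightarrow> card I + n = card J \<Longrightarrow>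
         \<exists>K. I \<subseteq> K \<and> K \<subseteq> I \<union> J \<and> indep M K \<and> card K = card J"
proof (induction n arbitrary: I)
  case 0
  then show ?case by (intro exI[of _ I]) simp
next
  case (Suc n)
  have lt: "card I < card J" using Suc.prems(3) by simp
  have "\<exists>x\<in>J - I. indep M (insert x I)" by (rule augment[OF M Suc.prems(1,2) lt])
  then obtain x where x1: "x \<in> J - I" and x2: "indep M (insert x I)" by (elim bexE)
  have fI: "finite I" using indep_fin[OF M Suc.prems(1)] .
  have xI: "x \<notin> I" using x1 by blast
  have "card (insert x I) = Suc (card I)" by (rule card_insert_disjoint[OF fI xI])
  then have "card (insert x I) + n = card J" using Suc.prems(3) by simp
  then have "\<exists>K. insert x I \<subseteq> K \<and> K \<subseteq> insert x I \<union> J \<and> indep M K \<and> card K = card J"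
    by (rule Suc.IH[OF x2 Suc.prems(2)])
  then obtain K where K: "insert x I \<subseteq> K" "K \<subseteq> insert x I \<union> J" "indep M K" "card K = card J"
    by (elim exE conjE)
  have "I \<subseteq> K" using K(1) by blast
  moreover have "K \<subseteq> I \<union> J" using K(2) x1 by blast
  ultimately show ?case using K(3,4) by (intro exI[of _ K]) simp
qed

definition maxin :: "'a matroid \<Rightarrow> 'a set \<Rightarrow> 'a set \<Rightarrow> bool" where
  "maxin M C B \<longleftrightarrow> B \<subseteq> C \<and> indep M B \<and> (\<forall>B'. B \<subseteq> B' \<and> B' \<subseteq> C \<and> indep M B' \<longrightarrow> B' = B)"

lemma maxin_restrict: "B \<in> bases (restrict M C) \<longleftrightarrow> maxin M C B"
  unfolding bases_restrict maxin_def by simp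

lemma maxin_card:
  assumes M: "matroid M" and B0: "maxin M C B0" and B1: "maxin M C B1"
  shows "card B0 \<le> card B1"
proof (rule ccontr)
  assume "\<not> card B0 \<le> card B1"
  then have lt: "card B1 < card B0" by simp
  have i0: "indep M B0" and i1: "indep M B1" and s0: "B0 \<subseteq> C" and s1: "B1 \<subseteq> C"
    and m1: "\<forall>B'. B1 \<subseteq> B' \<and> B' \<subseteq> C \<and> indep M B' \<longrightarrow> B' = B1"
    using B0 B1 unfolding maxin_def by simp_all
  have "\<exists>x\<in>B0 - B1. indep M (insert x B1)" by (rule augment[OF M i1 i0 lt])
  then obtain x where x1: "x \<in> B0 - B1" and x2: "indep M (insert x B1)" by (elim bexE)
  have "insert x B1 \<subseteq> C" using x1 s0 s1 by blast
  then have "insert x B1 = B1" using m1 x2 by blast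
  then show False using x1 by blast
qed

lemma swapmax:
  assumes M: "matroid M" and B0: "maxin M C B0" and B1: "maxin M C B1"
    and IC: "I \<inter> C = {}" and ind: "indep M (I \<union> B1)"
  shows "indep M (I \<union> B0)"
proof -
  have iB0: "indep M B0" and sB0: "B0 \<subseteq> C" and sB1: "B1 \<subseteq> C"
    using B0 B1 unfolding maxin_def by blast+
  have fIB1: "finite (I \<union> B1)" using indep_fin[OF M ind] .
  have fI: "finite I" and fB1: "finite B1" using fIB1 by simp_all
  have fB0: "finite B0" using indep_fin[OF M iB0] .
  have cc: "card B0 = card B1" using maxin_card[OF M B0 B1] maxin_card[OF M B1 B0] by simp
  have dis: "I \<inter> B1 = {}" using IC sB1 by blast
  have cIB1: "card (I \<union> B1) = card I + card B1" using card_Un_disjoint[OF fI fB1 dis] .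
  obtain n where "card B0 + n = card (I \<union> B1)" using cc cIB1 by (metis le_add2 le_add_diff_inverse add.commute)
  then obtain K where K: "B0 \<subseteq> K" "K \<subseteq> B0 \<union> (I \<union> B1)" "indep M K" "card K = card (I \<union> B1)"
    using augment_many[OF M iB0 ind] by blast
  have KC: "K \<inter> C = B0"
  proof -
    have "B0 \<subseteq> K \<inter> C" using K(1) sB0 by blast
    moreover have "K \<inter> C \<subseteq> C" "indep M (K \<inter> C)" using indep_sub[OF K(3)] by blast+
    ultimately show ?thesis using B0 unfolding maxin_def by blast
  qed
  have KmC: "K - C \<subseteq> I" using K(2) sB0 sB1 by blast
  have fK: "finite K" using indep_fin[OF M K(3)] .
  have KK: "K = B0 \<union> (K - C)" using KC by blast
  have dd: "B0 \<inter> (K - C) = {}" using sB0 by blast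
  have "card (B0 \<union> (K - C)) = card B0 + card (K - C)"
    by (rule card_Un_disjoint[OF fB0 finite_Diff[OF fK] dd])
  then have "card K = card B0 + card (K - C)" using KK by simp
  then have "card (K - C) = card I" using K(4) cIB1 cc by simp
  then have "K - C = I" using card_subset_eq[OF fI KmC] by simp
  then have "K = B0 \<union> I" using KC by blast
  then show ?thesis using K(3) by (simp add: Un_commute)
qed

lemma contract_indep:
  assumes M: "matroid M" and C: "C \<subseteq> gnd M" and B0: "maxin M C B0"
  shows "indep (contract M C) I \<longleftrightarrow> I \<subseteq> gnd M - C \<and> indep M (I \<union> B0)"
proof
  assume "indep (contract M C) I"
  then obtain X where X0: "X \<in> bases (contract M C)" "I \<subseteq> X" unfolding indep_def by blast
  then have X1: "X \<subseteq> gnd M - C" and "\<exists>BC. BC \<in> bases (restrict M C) \<and> X \<union> BC \<in> bases M"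
    unfolding bases_contract by simp_all
  then obtain B1 where b: "maxin M C B1" "X \<union> B1 \<in> bases M" unfolding maxin_restrict by blast
  have "indep M (I \<union> B1)" using b(2) X0(2) unfolding indep_def by blast
  then have "indep M (I \<union> B0)" using swapmax[OF M B0 b(1)] X0(2) X1 by blast
  then show "I \<subseteq> gnd M - C \<and> indep M (I \<union> B0)" using X0(2) X1 by blast
next
  assume h: "I \<subseteq> gnd M - C \<and> indep M (I \<union> B0)"
  then obtain B where B: "B \<in> bases M" "I \<union> B0 \<subseteq> B" unfolding indep_def by blast
  have sB0: "B0 \<subseteq> C" using B0 unfolding maxin_def by blast
  have "B \<inter> C = B0"
  proof -
    have "B0 \<subseteq> B \<inter> C" using B(2) sB0 by blast
    moreover have "indep M (B \<inter> C)" using B(1) unfolding indep_def by blast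
    moreover have "B \<inter> C \<subseteq> C" by blast
    ultimately show ?thesis using B0 unfolding maxin_def by blast
  qed
  then have BB: "(B - C) \<union> B0 = B" by blast
  have g: "B - C \<subseteq> gnd M - C" using m_bsub[OF M B(1)] by blast
  have "(B - C) \<union> B0 \<in> bases M" unfolding BB by (rule B(1))
  then have "B - C \<in> bases (contract M C)"
    unfolding bases_contract maxin_restrict using g B0 by blast
  moreover have "I \<subseteq> B - C" using h B(2) by blast
  ultimately show "indep (contract M C) I" unfolding indep_def by blast
qed

lemma maxin_ex:
  assumes M: "matroid M" and C: "C \<subseteq> gnd M"
  shows "\<exists>B0. maxin M C B0"
proof -
  have fC: "finite C" using m_fin[OF M] C finite_subset by blast
  have "bases (restrict M C) \<noteq> {}" using restrict_bases_ne[OF fC indep_empty[OF M]] .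
  then show ?thesis unfolding maxin_restrict[symmetric] by blast
qed


definition maxsets :: "('a set \<Rightarrow> bool) \<Rightarrow> 'a set set" where
  "maxsets F = {B. F B \<and> (\<forall>J. F J \<and> B \<subseteq> J \<longrightarrow> J = B)}"

definition famok :: "'a set \<Rightarrow> ('a set \<Rightarrow> bool) \<Rightarrow> bool" where
  "famok S F \<longleftrightarrow> finite S \<and> (\<forall>I. F I \<longrightarrow> I \<subseteq> S) \<and> F {} \<and> (\<forall>I J. F I \<and> J \<subseteq> I \<longrightarrow> F J) \<and>
     (\<forall>I J. F I \<and> F J \<and> card I < card J \<longrightarrow> (\<exists>x\<in>J - I. F (insert x I)))"

lemma fam_ext:
  assumes ok: "famok S F" and FI: "F I"
  shows "\<exists>B\<in>maxsets F. I \<subseteq> B"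
proof -
  have fin: "finite S" and sub: "\<forall>I. F I \<longrightarrow> I \<subseteq> S" using ok unfolding famok_def by simp_all
  have "\<exists>B. F B \<and> I \<subseteq> B \<and> (\<forall>J. F J \<and> B \<subseteq> J \<longrightarrow> J = B)" by (rule max_ext[OF fin FI sub])
  then obtain B where "F B" "I \<subseteq> B" "\<forall>J. F J \<and> B \<subseteq> J \<longrightarrow> J = B" by blast
  then show ?thesis unfolding maxsets_def by blast
qed

lemma fam_indep:
  assumes ok: "famok S F"
  shows "indep (S, maxsets F) I \<longleftrightarrow> F I"
proof
  assume "indep (S, maxsets F) I"
  then obtain B where B: "B \<in> maxsets F" "I \<subseteq> B" unfolding indep_def bases_def by auto
  then have "F B" unfolding maxsets_def by simp
  then show "F I" using ok B(2) unfolding famok_def by blast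
next
  assume "F I"
  then obtain B where "B \<in> maxsets F" "I \<subseteq> B" using fam_ext[OF ok] by blast
  then show "indep (S, maxsets F) I" unfolding indep_def bases_def by auto
qed

lemma fam_maxcard:
  assumes ok: "famok S F" and B1: "B1 \<in> maxsets F" and B2: "B2 \<in> maxsets F"
  shows "card B1 \<le> card B2"
proof (rule ccontr)
  assume "\<not> card B1 \<le> card B2"
  then have lt: "card B2 < card B1" by simp
  have F1: "F B1" and F2: "F B2" and m2: "\<forall>J. F J \<and> B2 \<subseteq> J \<longrightarrow> J = B2"
    using B1 B2 unfolding maxsets_def by simp_all
  have aug: "\<forall>I J. F I \<and> F J \<and> card I < card J \<longrightarrow> (\<exists>x\<in>J - I. F (insert x I))"
    using ok unfolding famok_def by simp
  have "\<exists>x\<in>B1 - B2. F (insert x B2)" using aug F1 F2 lt by simp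
  then obtain x where x1: "x \<in> B1 - B2" and x2: "F (insert x B2)" by (elim bexE)
  have "insert x B2 = B2" using m2 x2 by blast
  then show False using x1 by blast
qed

lemma fam_matroid:
  assumes ok: "famok S F"
  shows "matroid (S, maxsets F)"
proof -
  have fin: "finite S" and sub: "\<forall>I. F I \<longrightarrow> I \<subseteq> S" and F0: "F {}"
    and her: "\<forall>I J. F I \<and> J \<subseteq> I \<longrightarrow> F J"
    and aug: "\<forall>I J. F I \<and> F J \<and> card I < card J \<longrightarrow> (\<exists>x\<in>J - I. F (insert x I))"
    using ok unfolding famok_def by simp_all
  have ne: "maxsets F \<noteq> {}" using fam_ext[OF ok F0] by blast
  have bs: "\<forall>B\<in>maxsets F. B \<subseteq> S" using sub unfolding maxsets_def by blast
  have ex: "\<forall>B1\<in>maxsets F. \<forall>B2\<in>maxsets F. \<forall>x\<in>B1 - B2. \<exists>y\<in>B2 - B1. insert y (B1 - {x}) \<in> maxsets F"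
  proof (intro ballI)
    fix B1 B2 x assume B1: "B1 \<in> maxsets F" and B2: "B2 \<in> maxsets F" and x: "x \<in> B1 - B2"
    have F1: "F B1" and F2: "F B2" using B1 B2 unfolding maxsets_def by simp_all
    have "B1 \<subseteq> S" using sub F1 by simp
    then have fB1: "finite B1" using fin by (rule finite_subset)
    have cc: "card B1 = card B2" using fam_maxcard[OF ok B1 B2] fam_maxcard[OF ok B2 B1] by simp
    have Fx: "F (B1 - {x})" using her F1 Diff_subset by blast
    have xB1: "x \<in> B1" using x by blast
    have "card (B1 - {x}) < card B1" by (rule card_Diff1_less[OF fB1 xB1])
    then have cx: "card (B1 - {x}) < card B2" using cc by simp
    have "\<exists>y\<in>B2 - (B1 - {x}). F (insert y (B1 - {x}))" using aug Fx F2 cx by simp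
    then obtain y where y1: "y \<in> B2 - (B1 - {x})" and y2: "F (insert y (B1 - {x}))" by (elim bexE)
    have yB: "y \<in> B2 - B1" using y1 x by blast
    obtain B3 where B3: "B3 \<in> maxsets F" "insert y (B1 - {x}) \<subseteq> B3" using fam_ext[OF ok y2] by blast
    have "F B3" using B3(1) unfolding maxsets_def by simp
    then have "B3 \<subseteq> S" using sub by simp
    then have fB3: "finite B3" using fin by (rule finite_subset)
    have "card B3 = card B1" using fam_maxcard[OF ok B3(1) B1] fam_maxcard[OF ok B1 B3(1)] by simp
    moreover have "card (insert y (B1 - {x})) = card B1"
    proof -
      have yn: "y \<notin> B1 - {x}" using yB by blast
      have "card (insert y (B1 - {x})) = Suc (card (B1 - {x}))"
        by (rule card_insert_disjoint[OF finite_Diff[OF fB1] yn])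
      also have "\<dots> = card B1" by (rule card_Suc_Diff1[OF fB1]) (use x in blast)
      finally show ?thesis .
    qed
    ultimately have "insert y (B1 - {x}) = B3" using card_subset_eq[OF fB3 B3(2)] by simp
    then show "\<exists>y\<in>B2 - B1. insert y (B1 - {x}) \<in> maxsets F" using yB B3(1) by blast
  qed
  show ?thesis unfolding matroid_def gnd_def bases_def using fin ne bs ex by simp
qed

lemma rk_eqI:
  assumes fin: "finite T" and I: "I \<subseteq> T" "indep A I" "card I = k"
    and ub: "\<forall>J. J \<subseteq> T \<and> indep A J \<longrightarrow> card J \<le> k"
  shows "rk A T = k"
proof -
  have f: "finite (card ` {J. J \<subseteq> T \<and> indep A J})"
    using fin by (intro finite_imageI) (simp add: finite_Collect_subsets)
  have "k \<in> card ` {J. J \<subseteq> T \<and> indep A J}" using I by blast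
  moreover have "\<forall>y\<in>card ` {J. J \<subseteq> T \<and> indep A J}. y \<le> k" using ub by blast
  ultimately show ?thesis unfolding rk_def using Max_eqI[OF f] by blast
qed

lemma rk_attained:
  fixes A :: "'a matroid"
  assumes fin: "finite T" and ie: "indep A {}"
  shows "\<exists>I. I \<subseteq> T \<and> indep A I \<and> card I = rk A T"
proof -
  have f: "finite (card ` {J. J \<subseteq> T \<and> indep A J})"
    using fin by (intro finite_imageI) (simp add: finite_Collect_subsets)
  have m: "({}::'a set) \<in> {J. J \<subseteq> T \<and> indep A J}" using ie by simp
  have "card ({}::'a set) \<in> card ` {J. J \<subseteq> T \<and> indep A J}" by (rule imageI[OF m])
  then have ne: "card ` {J. J \<subseteq> T \<and> indep A J} \<noteq> {}" by (rule ex_in_conv[THEN iffD1, OF exI])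
  have "rk A T \<in> card ` {J. J \<subseteq> T \<and> indep A J}" unfolding rk_def by (rule Max_in[OF f ne])
  then obtain I where "I \<in> {J. J \<subseteq> T \<and> indep A J}" "rk A T = card I" by (rule imageE)
  then show ?thesis by auto
qed


lemma ch_facts:
  fixes N :: "'a matroid"
  assumes N: "matroid N" and ch: "circuit_hyperplane N H" and B: "B \<in> bases N"
  shows "H \<subseteq> gnd N" "\<not> indep N H" "\<forall>h\<in>H. indep N (H - {h})" "H \<noteq> {}" "card H = card B"
    "\<forall>x\<in>H. \<forall>w\<in>gnd N - H. insert w (H - {x}) \<in> bases N"
proof -
  have circ: "circuit N H" and hyp: "hyperplane N H" using ch unfolding circuit_hyperplane_def by simp_all
  show sH: "H \<subseteq> gnd N" and nH: "\<not> indep N H" and iH: "\<forall>h\<in>H. indep N (H - {h})"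
    using circ unfolding circuit_def by simp_all
  have ie: "indep N {}" by (rule indep_empty[OF N])
  show ne: "H \<noteq> {}" using nH ie by blast
  have fE: "finite (gnd N)" by (rule m_fin[OF N])
  have fH: "finite H" using sH fE by (rule finite_subset)
  obtain h0 where h0: "h0 \<in> H" using ne by blast
  have cH1: "card (H - {h0}) = card H - 1" using h0 by (rule card_Diff_singleton)
  have ubH: "\<forall>J. J \<subseteq> H \<and> indep N J \<longrightarrow> card J \<le> card H - 1"
  proof (intro allI impI)
    fix J assume J: "J \<subseteq> H \<and> indep N J"
    then have "J \<noteq> H" using nH by blast
    then have "J \<subset> H" using J by blast
    then have "card J < card H" using fH by (rule psubset_card_mono[rotated])
    then show "card J \<le> card H - 1" by simp
  qed
  have rkH: "rk N H = card H - 1"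
    by (rule rk_eqI[OF fH _ _ cH1 ubH]) (use h0 iH in blast)+
  have bB: "B \<subseteq> gnd N" using m_bsub[OF N B] .
  have rkE: "rk N (gnd N) = card B"
  proof (rule rk_eqI[OF fE bB basis_indep[OF B] refl])
    show "\<forall>J. J \<subseteq> gnd N \<and> indep N J \<longrightarrow> card J \<le> card B"
      using indep_card_le[OF N _ B] by blast
  qed
  have hypeq: "rk N H + 1 = rk N (gnd N)" and fl: "flat N H" using hyp unfolding hyperplane_def by simp_all
  have cHpos: "card H \<ge> 1" using fH ne by (simp add: Suc_leI card_gt_0_iff)
  show cHB: "card H = card B" using hypeq rkH rkE cHpos by simp
  have flw: "\<forall>w\<in>gnd N - H. rk N (insert w H) > rk N H" using fl unfolding flat_def by simp
  have ex1: "\<exists>z\<in>H. indep N (insert w (H - {z}))" if w: "w \<in> gnd N - H" for w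
  proof -
    have fwH: "finite (insert w H)" using fH by simp
    obtain I where I: "I \<subseteq> insert w H" "indep N I" "card I = rk N (insert w H)"
      using rk_attained[OF fwH ie] by blast
    have "rk N H < rk N (insert w H)" using flw w by blast
    then have cI: "card I \<ge> card H" using I(3) rkH cHpos by simp
    have "I \<noteq> insert w H"
    proof
      assume "I = insert w H"
      then have "indep N H" using I(2) indep_sub by blast
      then show False using nH by simp
    qed
    then obtain z where z: "z \<in> insert w H" "z \<notin> I" using I(1) by blast
    have Iz: "I \<subseteq> insert w H - {z}" using I(1) z(2) by blast
    have fz: "finite (insert w H - {z})" using fwH by simp
    have wH: "w \<notin> H" using w by simp
    have "card (insert w H - {z}) = card H"
    proof -
      have "card (insert w H) = Suc (card H)" by (rule card_insert_disjoint[OF fH wH])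
      moreover have "card (insert w H - {z}) = card (insert w H) - 1" using z(1) by (rule card_Diff_singleton)
      ultimately show ?thesis by simp
    qed
    then have Ieq: "I = insert w H - {z}" using card_seteq[OF fz Iz] cI by simp
    have "z \<noteq> w"
    proof
      assume "z = w"
      then have "I = H" using Ieq wH by blast
      then show False using I(2) nH by simp
    qed
    then have zH: "z \<in> H" using z(1) by simp
    have "insert w (H - {z}) = I" using Ieq \<open>z \<noteq> w\<close> by blast
    then show ?thesis using zH I(2) by blast
  qed
  show "\<forall>x\<in>H. \<forall>w\<in>gnd N - H. insert w (H - {x}) \<in> bases N"
  proof (intro ballI)
    fix x w assume x: "x \<in> H" and w: "w \<in> gnd N - H"
    obtain z where z: "z \<in> H" "indep N (insert w (H - {z}))" using ex1[OF w] by blast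
    have wH: "w \<notin> H" using w by simp
    have cx: "card (H - {x}) = card H - 1" using x by (rule card_Diff_singleton)
    have cz: "card (insert w (H - {z})) = card H"
    proof -
      have "w \<notin> H - {z}" using wH by simp
      then have "card (insert w (H - {z})) = Suc (card (H - {z}))" using fH by simp
      moreover have "card (H - {z}) = card H - 1" using z(1) by (rule card_Diff_singleton)
      ultimately show ?thesis using cHpos by simp
    qed
    have lt: "card (H - {x}) < card (insert w (H - {z}))" using cx cz cHpos by simp
    obtain u where u: "u \<in> insert w (H - {z}) - (H - {x})" "indep N (insert u (H - {x}))"
      using augment[OF N iH[rule_format, OF x] z(2) lt] by blast
    have "u = w \<or> u = x" using u(1) by blast
    moreover have "u \<noteq> x"
    proof
      assume "u = x"
      then have "insert u (H - {x}) = H" using x by blast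
      then show False using u(2) nH by simp
    qed
    ultimately have uw: "u = w" by simp
    have cc: "card (insert w (H - {x})) = card B"
    proof -
      have "w \<notin> H - {x}" using wH by simp
      then have "card (insert w (H - {x})) = Suc (card (H - {x}))" using fH by simp
      then show ?thesis using cx cHpos cHB by simp
    qed
    show "insert w (H - {x}) \<in> bases N"
      using indep_card_basis[OF N _ B cc] u(2) uw by simp
  qed
qed


locale DD =
  fixes N :: "'a matroid" and X Y :: "'a set" and f :: "'a \<Rightarrow> nat \<Rightarrow> bit"
  assumes N: "matroid N" and rep: "\<forall>I\<subseteq>gnd N. indep N I \<longleftrightarrow> gf2_indep f I"
    and conn: "connected_matroid N" and chX: "circuit_hyperplane N X" and chY: "circuit_hyperplane N Y"
    and disj: "X \<inter> Y = {}" and un: "X \<union> Y = gnd N"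
begin

lemma swap: "DD N Y X f"
  using N rep conn chX chY disj un unfolding DD_def by (simp add: Int_commute Un_commute)

lemma finE: "finite (gnd N)" by (rule m_fin[OF N])

lemma bN: "\<exists>B. B \<in> bases N" using m_ne[OF N] by blast

lemma XE: "X \<subseteq> gnd N" using un by blast
lemma YE: "Y \<subseteq> gnd N" using un by blast
lemma EX: "gnd N - X = Y" using un disj by blast
lemma finX: "finite X" using XE finE by (rule finite_subset)
lemma finY: "finite Y" using YE finE by (rule finite_subset)

lemma Xf: "\<not> indep N X" "\<forall>h\<in>X. indep N (X - {h})" "X \<noteq> {}"
  "\<forall>x\<in>X. \<forall>w\<in>Y. insert w (X - {x}) \<in> bases N"
proof -
  obtain B where B: "B \<in> bases N" using bN by blast
  show "\<not> indep N X" "\<forall>h\<in>X. indep N (X - {h})" "X \<noteq> {}"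
    using ch_facts[OF N chX B] by simp_all
  show "\<forall>x\<in>X. \<forall>w\<in>Y. insert w (X - {x}) \<in> bases N"
    using ch_facts(6)[OF N chX B] EX by simp
qed

lemma Xcard: "B \<in> bases N \<Longrightarrow> card B = card X"
  using ch_facts(5)[OF N chX] by simp

lemma XYcard: "card Y = card X"
proof -
  obtain B where B: "B \<in> bases N" using bN by blast
  show ?thesis using ch_facts(5)[OF N chY B] Xcard[OF B] by simp
qed

lemma indepN_card: "indep N I \<Longrightarrow> card I \<le> card X"
proof -
  assume I: "indep N I"
  obtain B where B: "B \<in> bases N" using bN by blast
  show ?thesis using indep_card_le[OF N I B] Xcard[OF B] by simp
qed

lemma indepN_card_basis: "indep N I \<Longrightarrow> card I = card X \<Longrightarrow> I \<in> bases N"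
proof -
  assume I: "indep N I" "card I = card X"
  obtain B where B: "B \<in> bases N" using bN by blast
  show ?thesis using indep_card_basis[OF N I(1) B] I(2) Xcard[OF B] by simp
qed

lemma X_sub_indep: "J \<subseteq> X \<Longrightarrow> J \<noteq> X \<Longrightarrow> indep N J"
proof -
  assume "J \<subseteq> X" "J \<noteq> X"
  then obtain h where h: "h \<in> X" "J \<subseteq> X - {h}" by blast
  then show ?thesis using Xf(2) indep_sub by blast
qed

lemma r3: "card X \<ge> 3"
proof (rule ccontr)
  assume "\<not> card X \<ge> 3"
  moreover have "card X \<noteq> 0" using finX Xf(3) by simp
  ultimately have "card X = 1 \<or> card X = 2" by linarith
  then show False
  proof
    assume c1: "card X = 1"
    obtain B where B: "B \<in> bases N" using bN by blast
    have "card B = 1" using Xcard[OF B] c1 by simp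
    then obtain b where b: "B = {b}" by (rule card_1_singletonE)
    have "b \<in> X \<or> b \<in> Y" using m_bsub[OF N B] b un by blast
    moreover have "X = {b}" if "b \<in> X" using c1 that by (metis card_1_singletonE singletonD)
    moreover have "Y = {b}" if "b \<in> Y" using c1 XYcard that by (metis card_1_singletonE singletonD)
    ultimately have "indep N X \<or> indep N Y" using B b basis_indep by metis
    moreover have "\<not> indep N Y" using swap DD.Xf(1) by blast
    ultimately show False using Xf(1) by blast
  next
    assume c2: "card X = 2"
    obtain a b where ab: "X = {a, b}" "a \<noteq> b" using c2 by (metis card_2_iff)
    obtain c d where cd: "Y = {c, d}" "c \<noteq> d" using c2 XYcard by (metis card_2_iff)
    have ac: "a \<in> gnd N" "c \<in> gnd N" "a \<noteq> c" using ab cd un disj by blast+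
    obtain C where C: "circuit N C" "a \<in> C" "c \<in> C" using conn ac unfolding connected_matroid_def by blast
    have CE: "C \<subseteq> gnd N" and Cd: "\<forall>x\<in>C. indep N (C - {x})" and Cn: "\<not> indep N C"
      using C(1) unfolding circuit_def by simp_all
    have nb: "b \<notin> C"
    proof
      assume "b \<in> C"
      then have "X \<subseteq> C - {c}" using ab C(2) ac disj cd by blast
      then show False using Cd C(3) Xf(1) indep_sub by blast
    qed
    have nd: "d \<notin> C"
    proof
      assume "d \<in> C"
      then have "Y \<subseteq> C - {a}" using cd C(3) ac disj ab by blast
      moreover have "\<not> indep N Y" using swap DD.Xf(1) by blast
      ultimately show False using Cd C(2) indep_sub by blast
    qed
    have "C = {a, c}" using CE nb nd C(2,3) un ab cd by blast
    moreover have "insert c (X - {b}) \<in> bases N" using Xf(4) ab cd by blast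
    moreover have "insert c (X - {b}) = {a, c}" using ab by blast
    ultimately show False using Cn basis_indep by metis
  qed
qed

definition MM :: "'a matroid" where "MM = (gnd N, bases N \<union> {X, Y})"

lemma gndM[simp]: "gnd MM = gnd N" by (simp add: MM_def gnd_def)
lemma basesM: "bases MM = bases N \<union> {X, Y}" by (simp add: MM_def bases_def)

lemma indepM: "indep MM I \<longleftrightarrow> indep N I \<or> I = X \<or> I = Y"
proof
  assume "indep MM I"
  then obtain B where B: "B \<in> bases N \<or> B = X \<or> B = Y" "I \<subseteq> B" unfolding indep_def basesM by blast
  show "indep N I \<or> I = X \<or> I = Y"
  proof (cases "B \<in> bases N")
    case True then show ?thesis using B(2) indep_def by blast
  next
    case False
    then have "B = X \<or> B = Y" using B(1) by blast
    moreover have "I \<subseteq> Y \<Longrightarrow> I \<noteq> Y \<Longrightarrow> indep N I" using swap DD.X_sub_indep by blast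
    ultimately show ?thesis using B(2) X_sub_indep by blast
  qed
next
  assume "indep N I \<or> I = X \<or> I = Y"
  then show "indep MM I" unfolding indep_def basesM by blast
qed

lemma indepM_card: "indep MM I \<Longrightarrow> card I \<le> card X"
  using indepM indepN_card XYcard by auto

lemma indepM_gnd: "indep MM I \<Longrightarrow> I \<subseteq> gnd N"
  using indepM indep_gnd[OF N] XE YE by blast

lemma e1:
  assumes B2: "B2 \<in> bases N \<or> B2 = Y" and nX: "B2 \<noteq> X" and x: "x \<in> X"
  shows "\<exists>y\<in>B2 - X. insert y (X - {x}) \<in> bases N"
proof -
  have cB2: "card B2 = card X" using B2 Xcard XYcard by blast
  have sB2: "B2 \<subseteq> gnd N" using B2 m_bsub[OF N] YE by blast
  have "\<not> B2 \<subseteq> X"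
  proof
    assume "B2 \<subseteq> X"
    then have "B2 = X" using card_subset_eq[OF finX] cB2 by blast
    then show False using nX by simp
  qed
  then obtain y where y: "y \<in> B2" "y \<notin> X" by blast
  have "y \<in> Y" using y sB2 EX by blast
  then show ?thesis using Xf(4) x y by blast
qed

lemma e2:
  assumes B1: "B1 \<in> bases N" and x: "x \<in> B1 - X"
  shows "\<exists>y\<in>X - B1. insert y (B1 - {x}) \<in> bases N \<or> insert y (B1 - {x}) = X"
proof (cases "\<exists>y\<in>X - B1. indep N (insert y (B1 - {x}))")
  case True
  then obtain y where y: "y \<in> X - B1" "indep N (insert y (B1 - {x}))" by blast
  have fB1: "finite B1" using m_bsub[OF N B1] finE by (rule finite_subset)
  have "card (insert y (B1 - {x})) = card B1"
  proof -
    have yn: "y \<notin> B1 - {x}" using y by blast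
    have "card (insert y (B1 - {x})) = Suc (card (B1 - {x}))"
      by (rule card_insert_disjoint[OF finite_Diff[OF fB1] yn])
    also have "\<dots> = card B1" by (rule card_Suc_Diff1[OF fB1]) (use x in blast)
    finally show ?thesis .
  qed
  then have "insert y (B1 - {x}) \<in> bases N" using indepN_card_basis[OF y(2)] Xcard[OF B1] by simp
  then show ?thesis using y by blast
next
  case False
  define J where "J = B1 - {x}"
  have fB1: "finite B1" using m_bsub[OF N B1] finE by (rule finite_subset)
  have xB1: "x \<in> B1" using x by blast
  have cJ: "card J = card X - 1" using card_Diff_singleton[OF xB1] Xcard[OF B1] by (simp add: J_def)
  have iJ: "indep N J" using basis_indep[OF B1] indep_sub unfolding J_def by blast
  have JX: "J \<subseteq> X"
  proof
    fix w assume wJ: "w \<in> J"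
    show "w \<in> X"
    proof (rule ccontr)
      assume wX: "w \<notin> X"
      have wY: "w \<in> Y" using wJ wX m_bsub[OF N B1] EX unfolding J_def by blast
      obtain z where z: "z \<in> X" using Xf(3) by blast
      have Ib: "insert w (X - {z}) \<in> bases N" using Xf(4) z wY by blast
      have cI: "card (insert w (X - {z})) = card X" using Xcard[OF Ib] .
      have lt: "card J < card (insert w (X - {z}))" using cJ cI r3 by simp
      obtain u where u: "u \<in> insert w (X - {z}) - J" "indep N (insert u J)"
        using augment[OF N iJ basis_indep[OF Ib] lt] by blast
      have "u \<in> X" using u(1) wJ by blast
      moreover have "u \<notin> B1" using u(1) x \<open>u \<in> X\<close> unfolding J_def by blast
      ultimately show False using False u(2) unfolding J_def by blast
    qed
  qed
  have "J \<noteq> X" using JX iJ Xf(1) by blast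
  then obtain y where y: "y \<in> X" "y \<notin> J" using JX by blast
  have yB1: "y \<notin> B1" using y x unfolding J_def by blast
  have "insert y J \<subseteq> X" using JX y by blast
  moreover have "card (insert y J) = card X"
  proof -
    have fJ: "finite J" unfolding J_def using fB1 by simp
    have "card (insert y J) = Suc (card J)" by (rule card_insert_disjoint[OF fJ y(2)])
    then show ?thesis using cJ r3 by simp
  qed
  ultimately have "insert y J = X" using card_subset_eq[OF finX] by blast
  then show ?thesis using y(1) yB1 unfolding J_def by blast
qed

lemma matroidM: "matroid MM"
proof -
  interpret sw: DD N Y X f by (rule swap)
  have ex: "\<forall>B1\<in>bases MM. \<forall>B2\<in>bases MM. \<forall>x\<in>B1 - B2. \<exists>y\<in>B2 - B1. insert y (B1 - {x}) \<in> bases MM"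
  proof (intro ballI)
    fix B1 B2 x assume B1: "B1 \<in> bases MM" and B2: "B2 \<in> bases MM" and x: "x \<in> B1 - B2"
    have B1c: "B1 \<in> bases N \<or> B1 = X \<or> B1 = Y" and B2c: "B2 \<in> bases N \<or> B2 = X \<or> B2 = Y"
      using B1 B2 unfolding basesM by blast+
    show "\<exists>y\<in>B2 - B1. insert y (B1 - {x}) \<in> bases MM"
    proof (cases "B1 = X")
      case True
      then have "B2 \<noteq> X" "B2 \<in> bases N \<or> B2 = Y" using x B2c by blast+
      then obtain y where "y \<in> B2 - X" "insert y (X - {x}) \<in> bases N" using e1 x True by blast
      then show ?thesis using True unfolding basesM by blast
    next
      case nX: False
      show ?thesis
      proof (cases "B1 = Y")
        case True
        then have "B2 \<noteq> Y" "B2 \<in> bases N \<or> B2 = X" using x B2c by blast+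
        then obtain y where "y \<in> B2 - Y" "insert y (Y - {x}) \<in> bases N" using sw.e1 x True by blast
        then show ?thesis using True unfolding basesM by blast
      next
        case nY: False
        then have B1N: "B1 \<in> bases N" using B1c nX by blast
        show ?thesis
        proof (cases "B2 \<in> bases N")
          case True
          then show ?thesis using m_exch[OF N B1N True x] unfolding basesM by blast
        next
          case False
          then have "B2 = X \<or> B2 = Y" using B2c by blast
          then show ?thesis
          proof
            assume "B2 = X"
            then show ?thesis using e2[OF B1N] x unfolding basesM by blast
          next
            assume "B2 = Y"
            then show ?thesis using sw.e2[OF B1N] x unfolding basesM by blast
          qed
        qed
      qed
    qed
  qed
  have "bases MM \<noteq> {}" unfolding basesM by blast
  moreover have "\<forall>B\<in>bases MM. B \<subseteq> gnd MM" unfolding basesM using m_bsub[OF N] XE YE by auto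
  ultimately show ?thesis unfolding matroid_def using finE ex by simp
qed

end


lemma NB:
  assumes fT: "finite T" and rp: "\<forall>I\<subseteq>T. P I \<longleftrightarrow> gf2_indep g I"
    and BT: "B \<subseteq> T" and PB: "P B" and x12: "x1 \<noteq> x2" "x1 \<in> T - B" "x2 \<in> T - B"
    and ex: "\<forall>y\<in>B. P (insert x1 (B - {y}))" "\<forall>y\<in>B. P (insert x2 (B - {y}))"
    and dep: "\<not> P (insert x1 B)" "\<not> P (insert x2 B)"
    and P12: "P {x1, x2}"
  shows False
proof -
  have fB: "finite B" using BT fT by (rule finite_subset)
  have circ: "(\<Sum>a\<in>insert x B. g a i) = 0"
    if x: "x \<in> T - B" and exx: "\<forall>y\<in>B. P (insert x (B - {y}))" and dx: "\<not> P (insert x B)" for x i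
  proof (rule gf2_circ)
    show "finite (insert x B)" using fB by simp
    have sub: "insert x B \<subseteq> T" using x BT by blast
    show "\<not> gf2_indep g (insert x B)" using rp sub dx by blast
    show "\<forall>a\<in>insert x B. gf2_indep g (insert x B - {a})"
    proof
      fix a assume a: "a \<in> insert x B"
      show "gf2_indep g (insert x B - {a})"
      proof (cases "a = x")
        case True
        then have "insert x B - {a} = B" using x by blast
        then show ?thesis using rp BT PB by simp
      next
        case False
        then have aB: "a \<in> B" using a by blast
        have eq: "insert x B - {a} = insert x (B - {a})" using False by blast
        have sub': "insert x (B - {a}) \<subseteq> T" using sub by blast
        have "P (insert x (B - {a}))" using exx aB by blast
        then have "gf2_indep g (insert x (B - {a}))" using rp sub' by blast
        then show ?thesis by (simp only: eq)
      qed
    qed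
  qed
  have s: "g x1 i = g x2 i" for i
  proof -
    have "g x1 i + (\<Sum>a\<in>B. g a i) = 0" using circ[OF x12(2) ex(1) dep(1), of i] fB x12(2) by simp
    moreover have "g x2 i + (\<Sum>a\<in>B. g a i) = 0" using circ[OF x12(3) ex(2) dep(2), of i] fB x12(3) by simp
    ultimately show ?thesis by (metis bit_add_eq0)
  qed
  have sub12: "{x1, x2} \<subseteq> T" using x12 by blast
  have gi: "gf2_indep g {x1, x2}" using rp sub12 P12 by blast
  have "(\<forall>i. (\<Sum>x\<in>{x1, x2}. (\<lambda>_. 1::bit) x * g x i) = 0) \<longrightarrow> (\<forall>x\<in>{x1, x2}. (\<lambda>_. 1::bit) x = 0)"
    using gi unfolding gf2_indep_def by (rule allE)
  moreover have "\<forall>i. (\<Sum>x\<in>{x1, x2}. (\<lambda>_. 1::bit) x * g x i) = 0"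
  proof
    fix i
    have "(\<Sum>x\<in>{x1, x2}. (\<lambda>_. 1::bit) x * g x i) = g x1 i + g x2 i"
      using x12(1) by (simp add: sum.insert)
    also have "\<dots> = 0" using s[of i] by simp
    finally show "(\<Sum>x\<in>{x1, x2}. (\<lambda>_. 1::bit) x * g x i) = 0" .
  qed
  ultimately have "\<forall>x\<in>{x1, x2}. (\<lambda>_. 1::bit) x = 0" by (rule mp)
  then have "(1::bit) = 0" by blast
  then show False by simp
qed

lemma three:
  assumes "finite A" "card A \<ge> 3"
  shows "\<exists>a b c. a \<in> A \<and> b \<in> A \<and> c \<in> A \<and> a \<noteq> b \<and> a \<noteq> c \<and> b \<noteq> c"
proof -
  have "A \<noteq> {}" using assms by auto
  then obtain a where a: "a \<in> A" by blast
  have c1: "card (A - {a}) \<ge> 2" using assms a by (simp add: card_Diff_singleton)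
  have "card (A - {a}) \<noteq> 0" using c1 by simp
  then have "A - {a} \<noteq> {}" by (metis card.empty)
  then obtain b where b: "b \<in> A - {a}" by blast
  have "card (A - {a} - {b}) \<ge> 1" using c1 b assms by (simp add: card_Diff_singleton)
  then have "card (A - {a} - {b}) \<noteq> 0" by simp
  then have "A - {a} - {b} \<noteq> {}" by (metis card.empty)
  then obtain c where c: "c \<in> A - {a} - {b}" by blast
  show ?thesis using a b c by blast
qed

context DD
begin

lemma Yf: "\<not> indep N Y" "\<forall>h\<in>Y. indep N (Y - {h})" "Y \<noteq> {}"
  "\<forall>x\<in>Y. \<forall>w\<in>X. insert w (Y - {x}) \<in> bases N" "card Y \<ge> 3"
  using DD.Xf[OF swap] DD.r3[OF swap] by simp_all

lemma notbinM: "\<not> binary MM"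
proof
  assume "binary MM"
  then obtain g where rp: "\<forall>I\<subseteq>gnd N. indep MM I \<longleftrightarrow> gf2_indep g I" unfolding binary_def by auto
  obtain x1 x2 x3 where xs: "x1 \<in> Y" "x2 \<in> Y" "x3 \<in> Y" "x1 \<noteq> x2" "x1 \<noteq> x3" "x2 \<noteq> x3"
    using three[OF finY Yf(5)] by blast
  have big: "\<not> indep MM (insert x X)" if "x \<in> Y" for x
  proof
    assume "indep MM (insert x X)"
    then have "card (insert x X) \<le> card X" by (rule indepM_card)
    moreover have "x \<notin> X" using that disj by blast
    ultimately show False using finX by simp
  qed
  show False
  proof (rule NB[OF finE rp XE])
    show "indep MM X" using indepM by blast
    show "x1 \<noteq> x2" by (rule xs(4))
    show "x1 \<in> gnd N - X" "x2 \<in> gnd N - X" using xs EX by blast+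
    show "\<forall>y\<in>X. indep MM (insert x1 (X - {y}))" "\<forall>y\<in>X. indep MM (insert x2 (X - {y}))"
      using Xf(4) xs indepM basis_indep by blast+
    show "\<not> indep MM (insert x1 X)" "\<not> indep MM (insert x2 X)" using big xs by blast+
    show "indep MM {x1, x2}" using xs indepM by (metis indep_def basesM UnCI insertCI empty_subsetI insert_subset)
  qed
qed

lemma notbin_delete:
  assumes e: "e \<in> X"
  shows "\<not> binary (delete MM e)"
proof
  assume "binary (delete MM e)"
  then obtain g where rp0: "\<forall>I\<subseteq>gnd N - {e}. indep (delete MM e) I \<longleftrightarrow> gf2_indep g I"
    unfolding binary_def by auto
  have fT: "finite (gnd N - {e})" using finE by simp
  have di: "indep (delete MM e) I \<longleftrightarrow> I \<subseteq> gnd N - {e} \<and> indep MM I" for I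
    unfolding delete_def gndM using restrict_indep[OF fT] .
  have rp: "\<forall>I\<subseteq>gnd N - {e}. indep MM I \<longleftrightarrow> gf2_indep g I" using rp0 di by simp
  have c2: "card (X - {e}) \<ge> 2" using r3 e finX by (simp add: card_Diff_singleton)
  obtain x1 x2 where xs: "x1 \<in> X - {e}" "x2 \<in> X - {e}" "x1 \<noteq> x2"
  proof -
    have "card (X - {e}) \<noteq> 0" using c2 by simp
    then have "X - {e} \<noteq> {}" by (metis card.empty)
    then obtain a where a: "a \<in> X - {e}" by blast
    have "card (X - {e} - {a}) \<ge> 1" using c2 a finX by (simp add: card_Diff_singleton)
    then have "card (X - {e} - {a}) \<noteq> 0" by simp
    then have "X - {e} - {a} \<noteq> {}" by (metis card.empty)
    then obtain b where b: "b \<in> X - {e} - {a}" by blast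
    show ?thesis using that[of a b] a b by blast
  qed
  have big: "\<not> indep MM (insert x Y)" if "x \<in> X" for x
  proof
    assume "indep MM (insert x Y)"
    then have "card (insert x Y) \<le> card X" by (rule indepM_card)
    moreover have "x \<notin> Y" using that disj by blast
    ultimately show False using finY XYcard by simp
  qed
  have YT: "Y \<subseteq> gnd N - {e}" using YE e disj by blast
  show False
  proof (rule NB[OF fT rp YT])
    show "indep MM Y" using indepM by blast
    show "x1 \<noteq> x2" by (rule xs(3))
    show "x1 \<in> gnd N - {e} - Y" "x2 \<in> gnd N - {e} - Y" using xs XE disj by blast+
    show "\<forall>y\<in>Y. indep MM (insert x1 (Y - {y}))" "\<forall>y\<in>Y. indep MM (insert x2 (Y - {y}))"
      using Yf(4) xs indepM basis_indep by blast+
    show "\<not> indep MM (insert x1 Y)" "\<not> indep MM (insert x2 Y)" using big xs by blast+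
    have "{x1, x2} \<subseteq> X" "{x1, x2} \<noteq> X" using xs e by blast+
    then show "indep MM {x1, x2}" using X_sub_indep indepM by blast
  qed
qed

lemma notbin_contract:
  assumes e: "e \<in> X"
  shows "\<not> binary (contract MM {e})"
proof
  assume "binary (contract MM {e})"
  then obtain g where rp0: "\<forall>I\<subseteq>gnd N - {e}. indep (contract MM {e}) I \<longleftrightarrow> gf2_indep g I"
    unfolding binary_def by auto
  have fT: "finite (gnd N - {e})" using finE by simp
  have ne: "bases MM \<noteq> {}" using m_ne[OF matroidM] .
  have bs: "\<forall>B\<in>bases MM. B \<subseteq> gnd MM" using m_bsub[OF matroidM] by blast
  have ie: "indep MM {e}" using indepM e X_sub_indep by (metis Xf(1) empty_subsetI insert_subset Xf(3) indepN_card_basis)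
  have ci: "indep (contract MM {e}) I \<longleftrightarrow> I \<subseteq> gnd N - {e} \<and> indep MM (insert e I)" for I
    using contract1_indep[OF ne bs, of e I] ie by simp
  have rp: "\<forall>I\<subseteq>gnd N - {e}. indep MM (insert e I) \<longleftrightarrow> gf2_indep g I" using rp0 ci by simp
  obtain x1 x2 x3 where xs: "x1 \<in> Y" "x2 \<in> Y" "x3 \<in> Y" "x1 \<noteq> x2" "x1 \<noteq> x3" "x2 \<noteq> x3"
    using three[OF finY Yf(5)] by blast
  have big: "\<not> indep MM (insert x X)" if "x \<in> Y" for x
  proof
    assume "indep MM (insert x X)"
    then have "card (insert x X) \<le> card X" by (rule indepM_card)
    moreover have "x \<notin> X" using that disj by blast
    ultimately show False using finX by simp
  qed
  have BT: "X - {e} \<subseteq> gnd N - {e}" using XE by blast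
  show False
  proof (rule NB[OF fT rp BT])
    have "insert e (X - {e}) = X" using e by blast
    then show "indep MM (insert e (X - {e}))" using indepM by simp
    show "x1 \<noteq> x2" by (rule xs(4))
    show "x1 \<in> gnd N - {e} - (X - {e})" "x2 \<in> gnd N - {e} - (X - {e})" using xs YE disj e by blast+
    have q: "insert e (insert x (X - {e} - {y})) = insert x (X - {y})" if "y \<in> X - {e}" for x y
      using that e by blast
    show "\<forall>y\<in>X - {e}. indep MM (insert e (insert x1 (X - {e} - {y})))"
      "\<forall>y\<in>X - {e}. indep MM (insert e (insert x2 (X - {e} - {y})))"
      using q Xf(4) xs indepM basis_indep by (metis DiffD1)+
    have q2: "insert e (insert x (X - {e})) = insert x X" for x using e by blast
    show "\<not> indep MM (insert e (insert x1 (X - {e})))" "\<not> indep MM (insert e (insert x2 (X - {e})))"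
      using big xs q2 by simp_all
    have "insert e {x1, x2} \<subseteq> insert e (Y - {x3})" using xs by blast
    moreover have "insert e (Y - {x3}) \<in> bases N" using Yf(4) xs(3) e by blast
    ultimately show "indep MM (insert e {x1, x2})" using indepM indep_def by blast
  qed
qed

end


context DD
begin

lemma NRX:
  assumes rp: "\<forall>I\<subseteq>gnd N. P I \<longleftrightarrow> gf2_indep g I"
    and PX: "P X" and Pb: "\<forall>B\<in>bases N. B \<noteq> H \<longrightarrow> P B" and Pc: "\<forall>I. P I \<longrightarrow> card I \<le> card X"
    and xs: "x1 \<in> Y" "x2 \<in> Y" "x1 \<noteq> x2"
    and nH: "\<forall>y\<in>X. insert x1 (X - {y}) \<noteq> H" "\<forall>y\<in>X. insert x2 (X - {y}) \<noteq> H"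
    and P12: "P {x1, x2}"
  shows False
proof (rule NB[OF finE rp XE PX xs(3)])
  show "x1 \<in> gnd N - X" unfolding EX by (rule xs(1))
  show "x2 \<in> gnd N - X" unfolding EX by (rule xs(2))
  have gen: "\<forall>y\<in>X. P (insert x (X - {y}))" if "x \<in> Y" "\<forall>y\<in>X. insert x (X - {y}) \<noteq> H" for x
  proof
    fix y assume y: "y \<in> X"
    have b: "insert x (X - {y}) \<in> bases N" by (rule Xf(4)[rule_format, OF y that(1)])
    have ne: "insert x (X - {y}) \<noteq> H" using that(2) y by blast
    show "P (insert x (X - {y}))" by (rule Pb[rule_format, OF b ne])
  qed
  show "\<forall>y\<in>X. P (insert x1 (X - {y}))" by (rule gen[OF xs(1) nH(1)])
  show "\<forall>y\<in>X. P (insert x2 (X - {y}))" by (rule gen[OF xs(2) nH(2)])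
  have big: "\<not> P (insert x X)" if "x \<in> Y" for x
  proof
    assume "P (insert x X)"
    then have "card (insert x X) \<le> card X" by (rule Pc[rule_format])
    moreover have "x \<notin> X" using that disj by blast
    ultimately show False using finX by simp
  qed
  show "\<not> P (insert x1 X)" by (rule big[OF xs(1)])
  show "\<not> P (insert x2 X)" by (rule big[OF xs(2)])
  show "P {x1, x2}" by (rule P12)
qed

lemma ne_minus:
  assumes "finite A" "card A \<ge> 3"
  shows "\<forall>y\<in>A. A - {y} \<noteq> {}"
proof
  fix y assume y: "y \<in> A"
  have "card (A - {y}) = card A - 1" using y by (rule card_Diff_singleton)
  then have "card (A - {y}) \<noteq> 0" using assms(2) by linarith
  then show "A - {y} \<noteq> {}" by (metis card.empty)
qed

lemma two_of:
  assumes "finite A" "card A \<ge> 2"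
  shows "\<exists>a b. a \<in> A \<and> b \<in> A \<and> a \<noteq> b"
proof -
  have "card A \<noteq> 0" using assms(2) by linarith
  then have "A \<noteq> {}" by (metis card.empty)
  then obtain a where a: "a \<in> A" by blast
  have "card (A - {a}) = card A - 1" using a by (rule card_Diff_singleton)
  then have "card (A - {a}) \<noteq> 0" using assms(2) by linarith
  then have "A - {a} \<noteq> {}" by (metis card.empty)
  then obtain b where b: "b \<in> A - {a}" by blast
  show ?thesis using a b by blast
qed

lemma notR_core:
  assumes Hb: "H \<in> bases N \<or> H = X \<or> H = Y"
    and rp: "\<forall>I\<subseteq>gnd N. P I \<longleftrightarrow> gf2_indep g I"
    and Pd: "\<forall>I. P I \<longleftrightarrow> (\<exists>B. (B \<in> bases N \<or> B = X \<or> B = Y) \<and> B \<noteq> H \<and> I \<subseteq> B)"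
  shows False
proof -
  interpret sw: DD N Y X f by (rule swap)
  have Pc: "\<forall>I. P I \<longrightarrow> card I \<le> card X"
  proof (intro allI impI)
    fix I assume "P I"
    then obtain B where B: "B \<in> bases N \<or> B = X \<or> B = Y" "I \<subseteq> B" using Pd by blast
    have "indep MM I" using B indepM indep_sub basis_indep by blast
    then show "card I \<le> card X" by (rule indepM_card)
  qed
  have Pc': "\<forall>I. P I \<longrightarrow> card I \<le> card Y" using Pc XYcard by simp
  have Pb: "\<forall>B\<in>bases N. B \<noteq> H \<longrightarrow> P B" using Pd by blast
  have Pd': "\<forall>I. P I \<longleftrightarrow> (\<exists>B. (B \<in> bases N \<or> B = Y \<or> B = X) \<and> B \<noteq> H \<and> I \<subseteq> B)"
    using Pd by blast
  show False
  proof (cases "H = X")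
    case True
    obtain x1 x2 x3 where xs: "x1 \<in> X" "x2 \<in> X" "x3 \<in> X" "x1 \<noteq> x2" "x1 \<noteq> x3" "x2 \<noteq> x3"
      using three[OF finX r3] by blast
    obtain z where z: "z \<in> Y" using Yf(3) by blast
    show False
    proof (rule sw.NRX[OF rp _ Pb Pc' xs(1,2,4)])
      show "P Y" using Pd True disj Yf(3) by blast
      have "\<forall>y\<in>Y. Y - {y} \<noteq> {}" by (rule ne_minus[OF finY Yf(5)])
      then show "\<forall>y\<in>Y. insert x1 (Y - {y}) \<noteq> H" "\<forall>y\<in>Y. insert x2 (Y - {y}) \<noteq> H"
        using True disj by blast+
      have "insert z (X - {x3}) \<in> bases N" using Xf(4) xs(3) z by blast
      moreover have "insert z (X - {x3}) \<noteq> H" using True z disj by blast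
      moreover have "{x1, x2} \<subseteq> insert z (X - {x3})" using xs by blast
      ultimately show "P {x1, x2}" using Pd by blast
    qed
  next
    case nX: False
    show False
    proof (cases "H = Y")
      case True
      obtain x1 x2 x3 where xs: "x1 \<in> Y" "x2 \<in> Y" "x3 \<in> Y" "x1 \<noteq> x2" "x1 \<noteq> x3" "x2 \<noteq> x3"
        using three[OF finY Yf(5)] by blast
      obtain z where z: "z \<in> X" using Xf(3) by blast
      show False
      proof (rule NRX[OF rp _ Pb Pc xs(1,2,4)])
        show "P X" using Pd nX by blast
        have "\<forall>y\<in>X. X - {y} \<noteq> {}" by (rule ne_minus[OF finX r3])
        then show "\<forall>y\<in>X. insert x1 (X - {y}) \<noteq> H" "\<forall>y\<in>X. insert x2 (X - {y}) \<noteq> H"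
          using True disj by blast+
        have "insert z (Y - {x3}) \<in> bases N" using Yf(4) xs(3) z by blast
        moreover have "insert z (Y - {x3}) \<noteq> H" using True z disj by blast
        moreover have "{x1, x2} \<subseteq> insert z (Y - {x3})" using xs by blast
        ultimately show "P {x1, x2}" using Pd by blast
      qed
    next
      case nY: False
      then have HN: "H \<in> bases N" using Hb nX by blast
      have fH: "finite H" using m_bsub[OF N HN] finE by (rule finite_subset)
      have cH: "card H = card X" using Xcard[OF HN] .
      have "card (gnd N) = card X + card Y" using un disj card_Un_disjoint[OF finX finY] by simp
      moreover have "card (gnd N - H) = card (gnd N) - card H" using m_bsub[OF N HN] finE by (simp add: card_Diff_subset fH)
      moreover have "gnd N - H = (X - H) \<union> (Y - H)" using un by blast
      moreover have "card ((X - H) \<union> (Y - H)) = card (X - H) + card (Y - H)"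
        using disj finX finY by (intro card_Un_disjoint) auto
      ultimately have cs: "card (X - H) + card (Y - H) = card X" using cH XYcard by simp
      show False
      proof (cases "card (Y - H) \<ge> 2")
        case True
        obtain x1 x2 where xs: "x1 \<in> Y - H" "x2 \<in> Y - H" "x1 \<noteq> x2"
          using two_of[OF _ True] finY by blast
        show False
        proof (rule NRX[OF rp _ Pb Pc])
          show "P X" using Pd nX by blast
          show "x1 \<in> Y" "x2 \<in> Y" "x1 \<noteq> x2" using xs by blast+
          show "\<forall>y\<in>X. insert x1 (X - {y}) \<noteq> H" "\<forall>y\<in>X. insert x2 (X - {y}) \<noteq> H" using xs by blast+
          show "P {x1, x2}" using Pd nY xs by blast
        qed
      next
        case False
        then have c2: "card (X - H) \<ge> 2" using cs r3 by simp
        obtain x1 x2 where xs: "x1 \<in> X - H" "x2 \<in> X - H" "x1 \<noteq> x2"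
          using two_of[OF _ c2] finX by blast
        show False
        proof (rule sw.NRX[OF rp _ Pb Pc'])
          show "P Y" using Pd nY by blast
          show "x1 \<in> X" "x2 \<in> X" "x1 \<noteq> x2" using xs by blast+
          show "\<forall>y\<in>Y. insert x1 (Y - {y}) \<noteq> H" "\<forall>y\<in>Y. insert x2 (Y - {y}) \<noteq> H" using xs by blast+
          show "P {x1, x2}" using Pd nX xs by blast
        qed
      qed
    qed
  qed
qed

lemma notR: "\<not> classR MM"
proof
  assume "classR MM"
  then obtain N' H where N': "matroid N'" "binary N'" "circuit_hyperplane N' H" "MM = relax N' H"
    using notbinM unfolding classR_def by blast
  have g: "gnd N' = gnd N" using N'(4) gndM by (metis gnd_relax)
  have b: "bases N' \<union> {H} = bases N \<union> {X, Y}" using N'(4) basesM by (metis bases_relax)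
  have nH: "\<not> indep N' H" using N'(3) unfolding circuit_hyperplane_def circuit_def by blast
  then have HnB: "H \<notin> bases N'" using basis_indep by blast
  have Hb: "H \<in> bases N \<or> H = X \<or> H = Y" using b by blast
  have bN': "B \<in> bases N' \<longleftrightarrow> (B \<in> bases N \<or> B = X \<or> B = Y) \<and> B \<noteq> H" for B
    using b HnB by blast
  obtain g where rp: "\<forall>I\<subseteq>gnd N. indep N' I \<longleftrightarrow> gf2_indep g I" using N'(2) g unfolding binary_def by auto
  have Pd: "\<forall>I. indep N' I \<longleftrightarrow> (\<exists>B. (B \<in> bases N \<or> B = X \<or> B = Y) \<and> B \<noteq> H \<and> I \<subseteq> B)"
    unfolding indep_def using bN' by blast
  show False by (rule notR_core[OF Hb rp Pd])
qed

end


lemma rk_ge: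
  assumes fin: "finite T" and I: "I \<subseteq> T" "indep A I"
  shows "card I \<le> rk A T"
proof -
  have f: "finite (card ` {J. J \<subseteq> T \<and> indep A J})"
    using fin by (intro finite_imageI) (simp add: finite_Collect_subsets)
  have m: "I \<in> {J. J \<subseteq> T \<and> indep A J}" using I by simp
  have "card I \<in> card ` {J. J \<subseteq> T \<and> indep A J}" by (rule imageI[OF m])
  then show ?thesis unfolding rk_def by (rule Max_ge[OF f])
qed

lemma pair_collapse: "A = (gnd A, bases A)" by (simp add: gnd_def bases_def)

context DD
begin

lemma PQ:
  assumes "(P = X \<and> Q = Y) \<or> (P = Y \<and> Q = X)"
  shows "P \<inter> Q = {}" "P \<union> Q = gnd N" "\<forall>x\<in>P. \<forall>w\<in>Q. insert w (P - {x}) \<in> bases N"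
    "\<not> indep N P" "card P = card X" "finite P" "card P \<ge> 3" "\<forall>J. J \<subseteq> P \<and> J \<noteq> P \<longrightarrow> indep N J"
    "P \<subseteq> gnd N" "Q \<subseteq> gnd N"
proof -
  interpret sw: DD N Y X f by (rule swap)
  show "P \<inter> Q = {}" "P \<union> Q = gnd N" using assms disj un by auto
  show "\<forall>x\<in>P. \<forall>w\<in>Q. insert w (P - {x}) \<in> bases N" using assms Xf(4) Yf(4) by auto
  show "\<not> indep N P" using assms Xf(1) Yf(1) by auto
  show "card P = card X" using assms XYcard by auto
  show "finite P" using assms finX finY by auto
  show "card P \<ge> 3" using assms r3 Yf(5) by auto
  show "\<forall>J. J \<subseteq> P \<and> J \<noteq> P \<longrightarrow> indep N J" using assms X_sub_indep sw.X_sub_indep by auto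
  show "P \<subseteq> gnd N" "Q \<subseteq> gnd N" using assms XE YE by auto
qed

lemma famB:
  assumes KE: "K \<subseteq> gnd N" and iK: "indep MM K" and TE: "T \<subseteq> gnd N" and KT: "K \<inter> T = {}"
    and gA: "gnd A = T" and iA: "\<forall>I\<subseteq>T. indep A I \<longleftrightarrow> indep MM (I \<union> K)"
    and cond: "K = X \<or> K = Y \<or> (\<not> (K \<subseteq> X \<and> X - K \<subseteq> T) \<and> \<not> (K \<subseteq> Y \<and> Y - K \<subseteq> T))"
  shows "binary A"
proof (cases "K = X \<or> K = Y")
  case True
  have cK: "card K = card X" using True XYcard by auto
  have fK: "finite K" using KE finE by (rule finite_subset)
  have "indep A I \<longleftrightarrow> gf2_indep (\<lambda>_ _. 0) I" if I: "I \<subseteq> T" for I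
  proof -
    have fI: "finite I" using I TE finE finite_subset by (metis)
    have "indep MM (I \<union> K) \<longleftrightarrow> I = {}"
    proof
      assume h: "indep MM (I \<union> K)"
      have "card (I \<union> K) = card I + card K" using card_Un_disjoint[OF fI fK] KT I by blast
      then have "card I = 0" using indepM_card[OF h] cK by simp
      then show "I = {}" using fI by simp
    next
      assume "I = {}" then show "indep MM (I \<union> K)" using iK by simp
    qed
    then show ?thesis using iA I gf2_zero[OF fI] by simp
  qed
  then show ?thesis unfolding binary_def gA by blast
next
  case False
  then have c2: "\<not> (K \<subseteq> X \<and> X - K \<subseteq> T)" "\<not> (K \<subseteq> Y \<and> Y - K \<subseteq> T)" using cond by blast+
  have iKN: "indep N K" using iK False indepM by blast
  have fK: "finite K" using KE finE by (rule finite_subset)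
  have gK: "gf2_indep f K" using rep KE iKN by blast
  obtain g where g: "\<forall>I. finite I \<longrightarrow> I \<inter> K = {} \<longrightarrow> (gf2_indep g I \<longleftrightarrow> gf2_indep f (I \<union> K))"
    using gf2_contract[OF fK gK] by blast
  have "indep A I \<longleftrightarrow> gf2_indep g I" if I: "I \<subseteq> T" for I
  proof -
    have fI: "finite I" using I TE finE finite_subset by (metis)
    have IK: "I \<inter> K = {}" using I KT by blast
    have nX: "I \<union> K \<noteq> X"
    proof
      assume "I \<union> K = X"
      then have "K \<subseteq> X" "X - K \<subseteq> T" using I IK by blast+
      then show False using c2(1) by blast
    qed
    have nY: "I \<union> K \<noteq> Y"
    proof
      assume "I \<union> K = Y"
      then have "K \<subseteq> Y" "Y - K \<subseteq> T" using I IK by blast+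
      then show False using c2(2) by blast
    qed
    have sub: "I \<union> K \<subseteq> gnd N" using I TE KE by blast
    have "indep A I \<longleftrightarrow> indep MM (I \<union> K)" using iA I by blast
    also have "\<dots> \<longleftrightarrow> indep N (I \<union> K)" using indepM nX nY by blast
    also have "\<dots> \<longleftrightarrow> gf2_indep f (I \<union> K)" using rep sub by blast
    also have "\<dots> \<longleftrightarrow> gf2_indep g I" using g fI IK by blast
    finally show ?thesis .
  qed
  then show ?thesis unfolding binary_def gA by blast
qed

lemma minor_setup:
  assumes C: "C \<subseteq> gnd N" and D: "D \<subseteq> gnd N" and B0: "maxin MM C B0"
    and S: "S = gnd N - C - D"
  shows "gnd (restrict (contract MM C) S) = S"
    "\<forall>I. indep (restrict (contract MM C) S) I \<longleftrightarrow> I \<subseteq> S \<and> indep MM (I \<union> B0)"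
    "B0 \<subseteq> C" "indep MM B0" "B0 \<inter> S = {}" "finite S" "S \<subseteq> gnd N"
    "bases (restrict (contract MM C) S) \<noteq> {}"
    "\<forall>B\<in>bases (restrict (contract MM C) S). B \<subseteq> S"
proof -
  show "gnd (restrict (contract MM C) S) = S" by simp
  show sB0: "B0 \<subseteq> C" and iB0: "indep MM B0" using B0 unfolding maxin_def by simp_all
  show "B0 \<inter> S = {}" using sB0 S by blast
  show SE: "S \<subseteq> gnd N" using S by blast
  show fS: "finite S" using SE finE by (rule finite_subset)
  have CM: "C \<subseteq> gnd MM" using C by simp
  have ci: "indep (contract MM C) I \<longleftrightarrow> I \<subseteq> gnd N - C \<and> indep MM (I \<union> B0)" for I
    using contract_indep[OF matroidM CM B0] by simp
  show ri: "\<forall>I. indep (restrict (contract MM C) S) I \<longleftrightarrow> I \<subseteq> S \<and> indep MM (I \<union> B0)"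
    using restrict_indep[OF fS] ci S by blast
  have "indep (contract MM C) {}" using ci iB0 by simp
  then show "bases (restrict (contract MM C) S) \<noteq> {}" by (rule restrict_bases_ne[OF fS])
  show "\<forall>B\<in>bases (restrict (contract MM C) S). B \<subseteq> S" unfolding bases_restrict by blast
qed

lemma cond_PQ:
  assumes PQ: "(P = X \<and> Q = Y) \<or> (P = Y \<and> Q = X)"
    and c: "\<not> (K \<subseteq> P \<and> P - K \<subseteq> T) \<and> \<not> (K \<subseteq> Q \<and> Q - K \<subseteq> T)"
  shows "K = X \<or> K = Y \<or> (\<not> (K \<subseteq> X \<and> X - K \<subseteq> T) \<and> \<not> (K \<subseteq> Y \<and> Y - K \<subseteq> T))"
  using PQ c by blast

lemma Zcase:
  assumes hPQ: "(P = X \<and> Q = Y) \<or> (P = Y \<and> Q = X)"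
    and SE: "S \<subseteq> gnd N" and SN: "S \<noteq> gnd N" and e: "e \<in> S"
    and B0S: "B0 \<inter> S = {}" and B0E: "B0 \<subseteq> gnd N"
    and ex: "B0 \<subseteq> P" "P - B0 \<subseteq> S - {e}" and nP: "B0 \<noteq> P"
    and gA: "gnd A = S - {e}" and iA: "\<forall>I\<subseteq>S - {e}. indep A I \<longleftrightarrow> indep MM (I \<union> insert e B0)"
  shows "binary A"
proof -
  note pq = PQ[OF hPQ]
  have eP: "e \<notin> P"
  proof
    assume "e \<in> P"
    moreover have "e \<notin> B0" using e B0S by blast
    ultimately have "e \<in> S - {e}" using ex(2) by blast
    then show False by blast
  qed
  then have eQ: "e \<in> Q" using e SE pq(2) by blast
  obtain x where x: "x \<in> P" "x \<notin> B0" using ex(1) nP by blast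
  have b: "insert e (P - {x}) \<in> bases N" using pq(3) x(1) eQ by blast
  have "insert e B0 \<subseteq> insert e (P - {x})" using ex(1) x by blast
  then have iK: "indep MM (insert e B0)" using b indepM indep_def by blast
  show ?thesis
  proof (rule famB[OF _ iK _ _ gA iA])
    show "insert e B0 \<subseteq> gnd N" using B0E e SE by blast
    show "S - {e} \<subseteq> gnd N" using SE by blast
    show "insert e B0 \<inter> (S - {e}) = {}" using B0S by blast
    have c1: "\<not> (insert e B0 \<subseteq> P \<and> P - insert e B0 \<subseteq> S - {e})" using eP by blast
    have c2: "\<not> (insert e B0 \<subseteq> Q \<and> Q - insert e B0 \<subseteq> S - {e})"
    proof
      assume h: "insert e B0 \<subseteq> Q \<and> Q - insert e B0 \<subseteq> S - {e}"
      then have "B0 = {}" using ex(1) pq(1) by blast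
      then have "P \<subseteq> S" "Q \<subseteq> S" using ex(2) h e by blast+
      then have "gnd N \<subseteq> S" using pq(2) by blast
      then show False using SE SN by blast
    qed
    show "insert e B0 = X \<or> insert e B0 = Y \<or> (\<not> (insert e B0 \<subseteq> X \<and> X - insert e B0 \<subseteq> S - {e}) \<and>
        \<not> (insert e B0 \<subseteq> Y \<and> Y - insert e B0 \<subseteq> S - {e}))"
      by (rule cond_PQ[OF hPQ]) (use c1 c2 in blast)
  qed
qed

lemma minorZ:
  assumes C: "C \<subseteq> gnd N" and D: "D \<subseteq> gnd N" and B0: "maxin MM C B0"
    and S: "S = gnd N - C - D" and SN: "S \<noteq> gnd N"
  shows "classZ (restrict (contract MM C) S)"
  unfolding classZ_def
proof
  let ?N0 = "restrict (contract MM C) S"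
  note ms = minor_setup[OF C D B0 S]
  fix e assume "e \<in> gnd ?N0"
  then have e: "e \<in> S" using ms(1) by simp
  have fT: "finite (S - {e})" using ms(6) by simp
  have gdel: "gnd (delete ?N0 e) = S - {e}" using ms(1) by simp
  have idel: "\<forall>I\<subseteq>S - {e}. indep (delete ?N0 e) I \<longleftrightarrow> indep MM (I \<union> B0)"
    unfolding delete_def ms(1) using restrict_indep[OF fT] ms(2) by blast
  have gcon: "gnd (contract ?N0 {e}) = S - {e}" using ms(1) by simp
  have icon0: "indep (contract ?N0 {e}) I \<longleftrightarrow> I \<subseteq> S - {e} \<and> indep ?N0 (if indep ?N0 {e} then insert e I else I)" for I
    using contract1_indep[OF ms(8)] ms(9) ms(1) by simp
  have ie: "indep ?N0 {e} \<longleftrightarrow> indep MM (insert e B0)" using ms(2) e by simp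
  have B0E: "B0 \<subseteq> gnd N" using ms(3) C by blast
  show "binary (delete ?N0 e) \<or> binary (contract ?N0 {e})"
  proof (cases "B0 = X \<or> B0 = Y \<or> (\<not> (B0 \<subseteq> X \<and> X - B0 \<subseteq> S - {e}) \<and> \<not> (B0 \<subseteq> Y \<and> Y - B0 \<subseteq> S - {e}))")
    case True
    have "binary (delete ?N0 e)"
      by (rule famB[OF B0E ms(4) _ _ gdel idel True]) (use ms(5,7) in blast)+
    then show ?thesis by blast
  next
    case False
    then obtain P Q where hPQ: "(P = X \<and> Q = Y) \<or> (P = Y \<and> Q = X)" and ex: "B0 \<subseteq> P" "P - B0 \<subseteq> S - {e}"
      and nP: "B0 \<noteq> P" by blast
    have "B0 \<subseteq> P" "B0 \<noteq> P" using ex nP by blast+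
    then obtain x where x: "x \<in> P" "x \<notin> B0" by blast
    have eP: "e \<notin> P"
    proof
      assume "e \<in> P"
      moreover have "e \<notin> B0" using e ms(5) by blast
      ultimately have "e \<in> S - {e}" using ex(2) by blast
      then show False by blast
    qed
    have eQ: "e \<in> Q" using e ms(7) PQ(2)[OF hPQ] eP by blast
    have b: "insert e (P - {x}) \<in> bases N" using PQ(3)[OF hPQ] x(1) eQ by blast
    have "insert e B0 \<subseteq> insert e (P - {x})" using ex(1) x by blast
    then have iK: "indep MM (insert e B0)" using b indepM indep_def by blast
    have icon: "\<forall>I\<subseteq>S - {e}. indep (contract ?N0 {e}) I \<longleftrightarrow> indep MM (I \<union> insert e B0)"
    proof (intro allI impI)
      fix I assume I: "I \<subseteq> S - {e}"
      have "indep (contract ?N0 {e}) I \<longleftrightarrow> indep ?N0 (insert e I)" using icon0 I ie iK by simp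
      also have "\<dots> \<longleftrightarrow> indep MM (insert e I \<union> B0)" using ms(2) I e by blast
      finally show "indep (contract ?N0 {e}) I \<longleftrightarrow> indep MM (I \<union> insert e B0)" by simp
    qed
    have "binary (contract ?N0 {e})"
      by (rule Zcase[OF hPQ ms(7) SN e ms(5) B0E ex nP gcon icon])
    then show ?thesis by blast
  qed
qed

lemma Rcase:
  assumes hPQ: "(P = X \<and> Q = Y) \<or> (P = Y \<and> Q = X)"
    and SE: "S \<subseteq> gnd N" and SN: "S \<noteq> gnd N" and fS: "finite S" and B0S: "B0 \<inter> S = {}"
    and B0P: "B0 \<subseteq> P" and nP: "B0 \<noteq> P" and HS: "P - B0 \<subseteq> S" and SH: "S \<noteq> P - B0"
    and gA: "gnd A = S" and iA: "\<forall>I. indep A I \<longleftrightarrow> I \<subseteq> S \<and> indep MM (I \<union> B0)"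
    and bA: "\<forall>B. B \<in> bases A \<longleftrightarrow> (B \<subseteq> S \<and> indep A B \<and> (\<forall>B'. B \<subseteq> B' \<and> B' \<subseteq> S \<and> indep A B' \<longrightarrow> B' = B))"
  shows "classR A"
proof -
  note pq = PQ[OF hPQ]
  define H where "H = P - B0"
  have memH: "\<And>x. x \<in> H \<longleftrightarrow> x \<in> P \<and> x \<notin> B0" unfolding H_def by simp
  have HS': "H \<subseteq> S" using HS unfolding H_def .
  have fB0: "finite B0" using B0P pq(6) by (rule finite_subset)
  have iB0: "indep N B0" using pq(8) B0P nP by blast
  have HB0: "H \<union> B0 = P" using B0P memH by blast
  have HB0d: "H \<inter> B0 = {}" using memH by blast
  have fH: "finite H" using HS' fS by (rule finite_subset)
  have cP: "card P = card H + card B0" using HB0 card_Un_disjoint[OF fH fB0 HB0d] by simp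
  obtain h0 where h0: "h0 \<in> H" using B0P nP memH by blast
  obtain w where w: "w \<in> S" "w \<notin> H" using HS' SH unfolding H_def by blast
  have cU: "card (I \<union> B0) = card I + card B0" if "I \<subseteq> S" for I
  proof -
    have "finite I" using that fS by (rule finite_subset)
    moreover have "I \<inter> B0 = {}" using that B0S by blast
    ultimately show ?thesis using card_Un_disjoint[OF _ fB0] by blast
  qed
  have wQ: "w' \<in> Q" if "w' \<in> S" "w' \<notin> H" for w'
  proof -
    have "w' \<notin> P" using that memH B0S by blast
    then show ?thesis using that(1) SE pq(2) by blast
  qed
  define F where "F = (\<lambda>I. I \<subseteq> S \<and> indep N (I \<union> B0))"
  have Fw: "F (insert w' J)" if "w' \<in> S" "w' \<notin> H" "J \<subseteq> H - {h}" "h \<in> H" for w' J h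
  proof -
    have "insert w' (P - {h}) \<in> bases N" using pq(3) wQ[OF that(1,2)] that(4) memH by blast
    moreover have "insert w' J \<union> B0 \<subseteq> insert w' (P - {h})" using that(3,4) memH B0P by blast
    ultimately have "indep N (insert w' J \<union> B0)" unfolding indep_def by blast
    moreover have "insert w' J \<subseteq> S" using that(1,3) HS' by blast
    ultimately show ?thesis unfolding F_def by simp
  qed
  have FHh: "F (H - {h})" if "h \<in> H" for h
  proof -
    have "(H - {h}) \<union> B0 \<subseteq> P" "(H - {h}) \<union> B0 \<noteq> P" using that memH B0P by blast+
    then have "indep N ((H - {h}) \<union> B0)" using pq(8) by blast
    then show ?thesis unfolding F_def using HS' by blast
  qed
  have nFH: "\<not> F H" unfolding F_def HB0 using pq(4) by simp
  have ok: "famok S F"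
    unfolding famok_def
  proof (intro conjI allI impI)
    show "finite S" by (rule fS)
    show "F I \<Longrightarrow> I \<subseteq> S" for I unfolding F_def by simp
    show "F {}" unfolding F_def using iB0 by simp
    show "F I \<and> J \<subseteq> I \<Longrightarrow> F J" for I J unfolding F_def
    proof -
      assume h: "(I \<subseteq> S \<and> indep N (I \<union> B0)) \<and> J \<subseteq> I"
      then have "J \<union> B0 \<subseteq> I \<union> B0" by blast
      then show "J \<subseteq> S \<and> indep N (J \<union> B0)" using h indep_sub by blast
    qed
    show "\<exists>x\<in>J - I. F (insert x I)" if h: "F I \<and> F J \<and> card I < card J" for I J
    proof -
      have I: "I \<subseteq> S" "indep N (I \<union> B0)" and J: "J \<subseteq> S" "indep N (J \<union> B0)" using h unfolding F_def by simp_all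
      have "card (I \<union> B0) < card (J \<union> B0)" using cU[OF I(1)] cU[OF J(1)] h by simp
      then obtain x where x: "x \<in> (J \<union> B0) - (I \<union> B0)" "indep N (insert x (I \<union> B0))"
        using augment[OF N I(2) J(2)] by blast
      have xJ: "x \<in> J - I" using x(1) by blast
      have "insert x (I \<union> B0) = insert x I \<union> B0" by blast
      then have "F (insert x I)" unfolding F_def using x(2) xJ J(1) I(1) by auto
      then show ?thesis using xJ by blast
    qed
  qed
  define N' where "N' = (S, maxsets F)"
  have mN': "matroid N'" unfolding N'_def by (rule fam_matroid[OF ok])
  have iN': "\<And>I. indep N' I \<longleftrightarrow> F I" unfolding N'_def by (rule fam_indep[OF ok])
  have gN': "gnd N' = S" unfolding N'_def gnd_def by simp
  have bN': "bases N' = maxsets F" unfolding N'_def bases_def by simp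
  have claim1: "indep A I \<longleftrightarrow> F I \<or> I = H" if I: "I \<subseteq> S" for I
  proof -
    have IB: "I \<inter> B0 = {}" using I B0S by blast
    have "indep A I \<longleftrightarrow> indep MM (I \<union> B0)" using iA I by blast
    also have "\<dots> \<longleftrightarrow> indep N (I \<union> B0) \<or> I \<union> B0 = P \<or> I \<union> B0 = Q" using indepM hPQ by blast
    also have "\<dots> \<longleftrightarrow> F I \<or> I = H"
    proof -
      have e1: "I \<union> B0 = P \<longleftrightarrow> I = H"
      proof
        assume "I \<union> B0 = P" then show "I = H" using IB memH by blast
      next
        assume "I = H" then show "I \<union> B0 = P" using HB0 by simp
      qed
      have e2: "I \<union> B0 \<noteq> Q"
      proof
        assume q: "I \<union> B0 = Q"
        then have "B0 = {}" using B0P pq(1) by blast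
        then have "P \<subseteq> S" "Q \<subseteq> S" using HS q I by auto
        then show False using pq(2) SE SN by blast
      qed
      show ?thesis unfolding F_def using e1 e2 I by blast
    qed
    finally show ?thesis .
  qed
  have HA: "H \<in> bases A"
  proof -
    have "indep A H" using claim1[OF HS'] by simp
    moreover have "\<forall>B'. H \<subseteq> B' \<and> B' \<subseteq> S \<and> indep A B' \<longrightarrow> B' = H"
    proof (intro allI impI)
      fix B' assume h: "H \<subseteq> B' \<and> B' \<subseteq> S \<and> indep A B'"
      then have iB: "indep MM (B' \<union> B0)" using iA by blast
      have fB: "finite (B' \<union> B0)" using h fS fB0 finite_subset by blast
      have Ps: "P \<subseteq> B' \<union> B0" using h HB0 by blast
      have "card (B' \<union> B0) \<le> card P" using indepM_card[OF iB] pq(5) by simp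
      then have "P = B' \<union> B0" using card_seteq[OF fB Ps] by blast
      then show "B' = H" using h B0S memH by blast
    qed
    ultimately show ?thesis using bA HS' by blast
  qed
  have bEq: "bases A - {H} = maxsets F"
  proof
    show "bases A - {H} \<subseteq> maxsets F"
    proof
      fix B assume B: "B \<in> bases A - {H}"
      then have BS: "B \<subseteq> S" and iB: "indep A B" and mx: "\<forall>B'. B \<subseteq> B' \<and> B' \<subseteq> S \<and> indep A B' \<longrightarrow> B' = B"
        using bA by blast+
      have "B \<noteq> H" using B by blast
      then have FB: "F B" using claim1[OF BS] iB by blast
      have "\<forall>J. F J \<and> B \<subseteq> J \<longrightarrow> J = B"
      proof (intro allI impI)
        fix J assume J: "F J \<and> B \<subseteq> J"
        then have JS: "J \<subseteq> S" unfolding F_def by simp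
        then have "indep A J" using claim1 J by blast
        then show "J = B" using mx J JS by blast
      qed
      then show "B \<in> maxsets F" unfolding maxsets_def using FB by blast
    qed
  next
    show "maxsets F \<subseteq> bases A - {H}"
    proof
      fix B assume B: "B \<in> maxsets F"
      then have FB: "F B" and mx: "\<forall>J. F J \<and> B \<subseteq> J \<longrightarrow> J = B" unfolding maxsets_def by simp_all
      have BS: "B \<subseteq> S" using FB unfolding F_def by simp
      have BH: "B \<noteq> H" using FB nFH by blast
      have iB: "indep A B" using claim1[OF BS] FB by simp
      have "\<forall>B'. B \<subseteq> B' \<and> B' \<subseteq> S \<and> indep A B' \<longrightarrow> B' = B"
      proof (intro allI impI)
        fix B' assume h: "B \<subseteq> B' \<and> B' \<subseteq> S \<and> indep A B'"
        then have "F B' \<or> B' = H" using claim1 by blast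
        then show "B' = B"
        proof
          assume "F B'" then show ?thesis using mx h by blast
        next
          assume BH': "B' = H"
          then have BsH: "B \<subseteq> H" using h by simp
          then obtain h where hh: "h \<in> H" "h \<notin> B" using BH by blast
          have "B \<subseteq> H - {h}" using BsH hh by blast
          then have "F (insert w B)" using Fw[OF w _ hh(1)] by blast
          then have "insert w B = B" using mx by blast
          then have "w \<in> H" using BsH by blast
          then show ?thesis using w by blast
        qed
      qed
      then have "B \<in> bases A" using bA BS iB by blast
      then show "B \<in> bases A - {H}" using BH by blast
    qed
  qed
  have Aeq: "A = relax N' H"
  proof -
    have "bases A = maxsets F \<union> {H}" using bEq HA by blast
    then have "A = (S, maxsets F \<union> {H})" using pair_collapse[of A] gA by simp
    then show ?thesis unfolding N'_def relax_def gnd_def bases_def by simp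
  qed
  have binN': "binary N'"
  proof -
    have gK: "gf2_indep f B0" using rep iB0 B0P pq(9) by blast
    obtain g where g: "\<forall>I. finite I \<longrightarrow> I \<inter> B0 = {} \<longrightarrow> (gf2_indep g I \<longleftrightarrow> gf2_indep f (I \<union> B0))"
      using gf2_contract[OF fB0 gK] by blast
    have "indep N' I \<longleftrightarrow> gf2_indep g I" if I: "I \<subseteq> S" for I
    proof -
      have fI: "finite I" using I fS by (rule finite_subset)
      have IK: "I \<inter> B0 = {}" using I B0S by blast
      have sub: "I \<union> B0 \<subseteq> gnd N" using I SE B0P pq(9) by blast
      have "indep N' I \<longleftrightarrow> indep N (I \<union> B0)" using iN' I unfolding F_def by simp
      also have "\<dots> \<longleftrightarrow> gf2_indep f (I \<union> B0)" using rep sub by blast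
      also have "\<dots> \<longleftrightarrow> gf2_indep g I" using g fI IK by blast
      finally show ?thesis .
    qed
    then show ?thesis unfolding binary_def gN' by blast
  qed
  have cHpos: "card H \<ge> 1" using fH h0 by (metis One_nat_def Suc_leI card_gt_0_iff empty_iff)
  have rkH: "rk N' H = card H - 1"
  proof (rule rk_eqI[OF fH])
    show "H - {h0} \<subseteq> H" by blast
    show "indep N' (H - {h0})" using iN' FHh[OF h0] by simp
    show "card (H - {h0}) = card H - 1" using h0 by (rule card_Diff_singleton)
    show "\<forall>J. J \<subseteq> H \<and> indep N' J \<longrightarrow> card J \<le> card H - 1"
    proof (intro allI impI)
      fix J assume J: "J \<subseteq> H \<and> indep N' J"
      then have "J \<noteq> H" using iN' nFH by blast
      then have "J \<subset> H" using J by blast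
      then have "card J < card H" using fH by (rule psubset_card_mono[rotated])
      then show "card J \<le> card H - 1" by simp
    qed
  qed
  have cI0: "card (insert w' (H - {h0})) = card H" if "w' \<notin> H" for w'
  proof -
    have "w' \<notin> H - {h0}" using that by blast
    then have "card (insert w' (H - {h0})) = Suc (card (H - {h0}))" using fH by simp
    moreover have "card (H - {h0}) = card H - 1" using h0 by (rule card_Diff_singleton)
    ultimately show ?thesis using cHpos by simp
  qed
  have rkS: "rk N' S = card H"
  proof (rule rk_eqI[OF fS])
    show "insert w (H - {h0}) \<subseteq> S" using w HS' by blast
    show "indep N' (insert w (H - {h0}))" using iN' Fw[OF w _ h0] by blast
    show "card (insert w (H - {h0})) = card H" using cI0 w(2) by blast
    show "\<forall>J. J \<subseteq> S \<and> indep N' J \<longrightarrow> card J \<le> card H"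
    proof (intro allI impI)
      fix J assume J: "J \<subseteq> S \<and> indep N' J"
      then have "indep N (J \<union> B0)" using iN' unfolding F_def by blast
      then have "indep MM (J \<union> B0)" using indepM by blast
      then have "card (J \<union> B0) \<le> card X" by (rule indepM_card)
      then show "card J \<le> card H" using cU J cP pq(5) by simp
    qed
  qed
  have chH: "circuit_hyperplane N' H"
    unfolding circuit_hyperplane_def circuit_def hyperplane_def flat_def gN'
  proof (intro conjI ballI)
    show "H \<subseteq> S" by (rule HS')
    show "\<not> indep N' H" using iN' nFH by simp
    show "indep N' (H - {x})" if "x \<in> H" for x using iN' FHh[OF that] by simp
    show "H \<subseteq> S" by (rule HS')
    show "rk N' H < rk N' (insert x H)" if x: "x \<in> S - H" for x
    proof -
      have fxH: "finite (insert x H)" using fH by simp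
      have "indep N' (insert x (H - {h0}))" using iN' Fw[OF _ _ _ h0] x by blast
      moreover have "insert x (H - {h0}) \<subseteq> insert x H" by blast
      ultimately have "card (insert x (H - {h0})) \<le> rk N' (insert x H)" using rk_ge[OF fxH] by blast
      then have "card H \<le> rk N' (insert x H)" using cI0 x by simp
      then show ?thesis using rkH cHpos by simp
    qed
    show "rk N' H + 1 = rk N' S" using rkH rkS cHpos by simp
  qed
  show ?thesis unfolding classR_def using mN' binN' chH Aeq by blast
qed

lemma minorR:
  assumes C: "C \<subseteq> gnd N" and D: "D \<subseteq> gnd N" and B0: "maxin MM C B0"
    and S: "S = gnd N - C - D" and SN: "S \<noteq> gnd N"
  shows "classR (restrict (contract MM C) S)"
proof -
  let ?N0 = "restrict (contract MM C) S"
  note ms = minor_setup[OF C D B0 S]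
  have B0E: "B0 \<subseteq> gnd N" using ms(3) C by blast
  have iA: "\<forall>I\<subseteq>S. indep ?N0 I \<longleftrightarrow> indep MM (I \<union> B0)" using ms(2) by blast
  show ?thesis
  proof (cases "B0 = X \<or> B0 = Y \<or> (\<not> (B0 \<subseteq> X \<and> X - B0 \<subseteq> S) \<and> \<not> (B0 \<subseteq> Y \<and> Y - B0 \<subseteq> S))")
    case True
    have "binary ?N0" by (rule famB[OF B0E ms(4) ms(7) ms(5) ms(1) iA True])
    then show ?thesis unfolding classR_def by blast
  next
    case False
    then obtain P Q where hPQ: "(P = X \<and> Q = Y) \<or> (P = Y \<and> Q = X)" and ex: "B0 \<subseteq> P" "P - B0 \<subseteq> S"
      and nP: "B0 \<noteq> P" by blast
    note pq = PQ[OF hPQ]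
    show ?thesis
    proof (cases "S = P - B0")
      case True
      obtain g where g: "\<forall>I\<subseteq>S. gf2_indep g I" using gf2_free[OF ms(6)] by blast
      have "indep ?N0 I" if I: "I \<subseteq> S" for I
      proof -
        have sub: "I \<union> B0 \<subseteq> P" using I True ex by blast
        have "indep MM (I \<union> B0)"
        proof (cases "I \<union> B0 = P")
          case True then show ?thesis using indepM hPQ by blast
        next
          case False then show ?thesis using pq(8) sub indepM by blast
        qed
        then show ?thesis using iA I by blast
      qed
      then have "\<forall>I\<subseteq>gnd ?N0. indep ?N0 I \<longleftrightarrow> gf2_indep g I" using g ms(1) by simp
      then have "binary ?N0" unfolding binary_def by blast
      then show ?thesis unfolding classR_def by blast
    next
      case SH: False
      have ri: "\<And>I. indep ?N0 I \<longleftrightarrow> I \<subseteq> S \<and> indep (contract MM C) I" using restrict_indep[OF ms(6)] .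
      have bA: "\<forall>B. B \<in> bases ?N0 \<longleftrightarrow> (B \<subseteq> S \<and> indep ?N0 B \<and> (\<forall>B'. B \<subseteq> B' \<and> B' \<subseteq> S \<and> indep ?N0 B' \<longrightarrow> B' = B))"
        unfolding bases_restrict mem_Collect_eq ri by blast
      show ?thesis
        by (rule Rcase[OF hPQ ms(7) SN ms(6) ms(5) ex(1) nP ex(2) SH ms(1) ms(2) bA])
    qed
  qed
qed

end

theorem lemma2p9:
  fixes M :: "'a matroid"
  assumes "classD M"
  shows "excluded_minor classZ M \<and> excluded_minor classR M"
proof -
  obtain N X Y where hN: "matroid N" "binary N" "connected_matroid N"
    "circuit_hyperplane N X" "circuit_hyperplane N Y" "X \<inter> Y = {}" "X \<union> Y = gnd N"
    "M = relax (relax N X) Y"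
    using assms unfolding classD_def by blast
  obtain f where f: "\<forall>I\<subseteq>gnd N. indep N I \<longleftrightarrow> gf2_indep f I" using hN(2) unfolding binary_def by blast
  interpret DD N X Y f using hN f unfolding DD_def by simp
  have MM: "M = MM"
  proof -
    have "bases N \<union> {X} \<union> {Y} = bases N \<union> {X, Y}" by blast
    then show ?thesis using hN(8) unfolding MM_def relax_def gnd_def bases_def by simp
  qed
  have mM: "matroid M" using matroidM MM by simp
  obtain e where e: "e \<in> X" using Xf(3) by blast
  have eE: "e \<in> gnd MM" using e XE by auto
  have nZ: "\<not> classZ M" unfolding classZ_def MM using eE notbin_delete[OF e] notbin_contract[OF e] by blast
  have nR: "\<not> classR M" using notR MM by simp
  have pm: "classZ N0 \<and> classR N0" if pm: "proper_minor N0 M" for N0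
  proof -
    obtain C D where CD: "C \<subseteq> gnd N" "D \<subseteq> gnd N" "C \<inter> D = {}" "C \<union> D \<noteq> {}"
      "N0 = restrict (contract MM C) (gnd N - C - D)"
      using pm unfolding proper_minor_def MM by auto
    obtain B0 where B0: "maxin MM C B0" using maxin_ex[OF matroidM] CD(1) by auto
    have SN: "gnd N - C - D \<noteq> gnd N" using CD(1,2,4) by blast
    show ?thesis using minorZ[OF CD(1,2) B0 refl SN] minorR[OF CD(1,2) B0 refl SN] CD(5) by simp
  qed
  show ?thesis unfolding excluded_minor_def using mM nZ nR pm by blast
qed


end
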